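(* Assume conditions A, D' and E' hold for the semi-Markov processes $\eta^{(\varepsilon)}(t)$, $\varepsilon\in(0,\varepsilon_0]$, together with the paper's standing regularity conditions on the semi-Markov kernels, and let $\delta^*=\min_{i\in\mathbb{X},\,j\in\mathbb{Y}_i}(\delta_{ij}\wedge\dot\delta_{ij})$. Then for every $i\in\mathbb{X}$ the stationary probability $\pi_i(\varepsilon)$ admits a pivotal Taylor expansion with a power-type remainder bound of exponent $\delta^*$: there exist integers $0\le n^-_i\le n^+_i$, reals $c_i[l]$, $n^-_i\le l\le n^+_i$, with $c_i[n^-_i]\ne0$, and constants $G^*_i\in(0,\infty)$, $\varepsilon_i\in(0,\varepsilon_0]$ such that $\big|\pi_i(\varepsilon)-\sum_{l=n^-_i}^{n^+_i}c_i[l]\varepsilon^l\big|\le G^*_i\varepsilon^{n^+_i+\delta^*}$ for $0<\varepsilon\le\varepsilon_i$.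
   Context: Let $\mathbb{X}=\{1,\dots,N\}$, $0<\varepsilon_0\le1$. For each $\varepsilon\in(0,\varepsilon_0]$, $\eta^{(\varepsilon)}(t)$ is a semi-Markov process on $\mathbb{X}$ with jump times $0=\tau_0<\tau_1<\cdots$, embedded Markov chain $\eta_n=\eta^{(\varepsilon)}(\tau_n)$, sojourn times $\kappa_{n+1}=\tau_{n+1}-\tau_n$ and semi-Markov transition probabilities $Q^{(\varepsilon)}_{ij}(t)=P(\eta_{n+1}=j,\kappa_{n+1}\le t\mid\eta_n=i)$; $p_{ij}(\varepsilon)=Q^{(\varepsilon)}_{ij}(\infty)$ and $e_{ij}(\varepsilon)=\int_0^\infty t\,Q^{(\varepsilon)}_{ij}(dt)$ (finite). The paper also assumes standing regularity conditions on $Q^{(\varepsilon)}_{ij}$ guaranteeing a well-defined process with finite $e_{ij}$. Let $e_i(\varepsilon)=\sum_{j\in\mathbb{X}}e_{ij}(\varepsilon)$ (expected sojourn time in $i$), $E_{ii}(\varepsilon)$ the expectation of $\tau_{\nu_i}$, $\nu_i=\min\{n\ge1:\eta_n=i\}$, for the process started at $\eta_0=i$, and $\pi_i(\varepsilon)=e_i(\varepsilon)/E_{ii}(\varepsilon)$, the stationary (long-run time-average) probability of state $i$. Condition A: there are nonempty $\mathbb{Y}_i\subseteq\mathbb{X}$ with (a) $p_{ij}(\varepsilon)>0$ for $j\in\mathbb{Y}_i$; (b) $p_{ij}(\varepsilon)=0$ for $j\notin\mathbb{Y}_i$; (c) for all $i,j$ there are $n\ge1$ and $i=l_0,\dots,l_n=j$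 with $l_m\in\mathbb{Y}_{l_{m-1}}$. Condition D': for $j\in\mathbb{Y}_i$, $p_{ij}(\varepsilon)=\sum_{l=l^-_{ij}}^{l^+_{ij}}a_{ij}[l]\varepsilon^l+o_{ij}(\varepsilon)$ with integers $0\le l^-_{ij}\le l^+_{ij}$, $a_{ij}[l^-_{ij}]>0$, $|o_{ij}(\varepsilon)|\le G_{ij}\varepsilon^{l^+_{ij}+\delta_{ij}}$ for $0<\varepsilon\le\varepsilon_{ij}$, $\delta_{ij}\in(0,1]$, $G_{ij}\in(0,\infty)$, $\varepsilon_{ij}\in(0,\varepsilon_0]$. Condition E': for $j\in\mathbb{Y}_i$, $e_{ij}(\varepsilon)=\sum_{l=m^-_{ij}}^{m^+_{ij}}b_{ij}[l]\varepsilon^l+\dot o_{ij}(\varepsilon)$ with integers $m^-_{ij}\le m^+_{ij}$, $b_{ij}[m^-_{ij}]>0$, $|\dot o_{ij}(\varepsilon)|\le\dot G_{ij}\varepsilon^{m^+_{ij}+\dot\delta_{ij}}$ for $0<\varepsilon\le\dot\varepsilon_{ij}$, $\dot\delta_{ij}\in(0,1]$, $\dot G_{ij}\in(0,\infty)$, $\dot\varepsilon_{ij}\in(0,\varepsilon_0]$. *)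

theory Defs
  imports "HOL-Analysis.Analysis"
begin

text \<open>Semi-Markov transition kernels: for each perturbation parameter eps and states i j,
  Q eps i j is the (finite, sub-probability) measure on the real line with distribution
  function t \<mapsto> Q_ij^(eps)(t) = P(eta_(n+1) = j, kappa_(n+1) \<le> t | eta_n = i).\<close>

type_synonym smkernel = "real \<Rightarrow> nat \<Rightarrow> nat \<Rightarrow> real measure"

definition smp :: "smkernel \<Rightarrow> real \<Rightarrow> nat \<Rightarrow> nat \<Rightarrow> real" where
  "smp Q eps i j = measure (Q eps i j) UNIV"

definition sme :: "smkernel \<Rightarrow> real \<Rightarrow> nat \<Rightarrow> nat \<Rightarrow> real" where
  "sme Q eps i j = integral\<^sup>L (Q eps i j) (\<lambda>t. t)"

definition sme_state :: "nat \<Rightarrow> smkernel \<Rightarrow> real \<Rightarrow> nat \<Rightarrow> real" where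
  "sme_state N Q eps i = (\<Sum>j\<in>{1..N}. sme Q eps i j)"

text \<open>For a path ls = [l_0,...,l_n] of the embedded chain, the expectation of
  (kappa_1 + ... + kappa_n) restricted to the event that eta_0..eta_n follow the path,
  given eta_0 = l_0:  sum_k e_(l_(k-1) l_k) * prod_(m \<noteq> k) p_(l_(m-1) l_m).\<close>
definition path_time :: "smkernel \<Rightarrow> real \<Rightarrow> nat list \<Rightarrow> real" where
  "path_time Q eps ls =
     (\<Sum>k<length ls - 1. sme Q eps (ls ! k) (ls ! Suc k) *
        (\<Prod>m\<in>{..<length ls - 1} - {k}. smp Q eps (ls ! m) (ls ! Suc m)))"

text \<open>E_ii = expectation of tau_(nu_i) for the process started at i, written out as the sum
  over n = nu_i (n = Suc k) and over the paths i, l_1, ..., l_k, i with l_1..l_k \<noteq> i.\<close>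
definition sm_return_time :: "nat \<Rightarrow> smkernel \<Rightarrow> real \<Rightarrow> nat \<Rightarrow> real" where
  "sm_return_time N Q eps i =
     (\<Sum>k. \<Sum>xs\<in>{xs. set xs \<subseteq> {1..N} - {i} \<and> length xs = k}. path_time Q eps (i # xs @ [i]))"

definition sm_stat :: "nat \<Rightarrow> smkernel \<Rightarrow> real \<Rightarrow> nat \<Rightarrow> real" where
  "sm_stat N Q eps i = sme_state N Q eps i / sm_return_time N Q eps i"

end

theory Submission
  imports Defs
begin

definition PL :: "real \<Rightarrow> (real \<Rightarrow> real) \<Rightarrow> bool" where
 "PL d f \<longleftrightarrow> (\<exists>c>0. \<exists>k::int. \<exists>C>0. \<exists>e1>0. \<forall>x. 0<x \<and> x\<le>e1 \<longrightarrow>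
     \<bar>f x - c * x powi k\<bar> \<le> C * x powi k * x powr d)"

definition Z0 :: "(real \<Rightarrow> real) \<Rightarrow> bool" where
 "Z0 f \<longleftrightarrow> (\<exists>e1>0. \<forall>x. 0<x \<and> x\<le>e1 \<longrightarrow> f x = 0)"

definition PZ :: "real \<Rightarrow> (real \<Rightarrow> real) \<Rightarrow> bool" where
 "PZ d f \<longleftrightarrow> PL d f \<or> Z0 f"

lemma PLE:
  assumes "PL d f"
  obtains c C e1 k where "c>0" "C>0" "e1>0" "e1 \<le> 1"
    "\<And>x. 0<x \<Longrightarrow> x\<le>e1 \<Longrightarrow> \<bar>f x - c * x powi k\<bar> \<le> C * x powi k * x powr d"
proof -
  from assms obtain c k C e1 where h: "c>0" "C>0" "e1>0"
    "\<And>x. 0<x \<Longrightarrow> x\<le>e1 \<Longrightarrow> \<bar>f x - c * x powi k\<bar> \<le> C * x powi k * x powr d"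
    unfolding PL_def by blast
  show ?thesis using h by (intro that[of c C "min e1 1" k]) auto
qed

lemma PLI:
  assumes "c>0" "C>0" "e1>0"
    "\<And>x. 0<x \<Longrightarrow> x\<le>e1 \<Longrightarrow> \<bar>f x - c * x powi k\<bar> \<le> C * x powi k * x powr d"
  shows "PL d f"
  unfolding PL_def using assms by blast

lemma Z0E:
  assumes "Z0 f" obtains e1 where "e1>0" "e1\<le>1" "\<And>x. 0<x \<Longrightarrow> x\<le>e1 \<Longrightarrow> f x = 0"
proof -
  from assms obtain e1 where "e1>0" "\<And>x. 0<x \<Longrightarrow> x\<le>e1 \<Longrightarrow> f x = 0" unfolding Z0_def by blast
  then show ?thesis by (intro that[of "min e1 1"]) auto
qed

lemma mult_aux:
  fixes a b w u v c1 c2 C1 C2 :: real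
  assumes "a>0" "b>0" "0\<le>w" "w\<le>1" "\<bar>u\<bar> \<le> C1 * a * w" "\<bar>v\<bar> \<le> C2 * b * w" "c1>0" "c2>0" "C1>0" "C2>0"
  shows "\<bar>(c1 * a+u) * (c2 * b+v) - c1 * c2 * (a * b)\<bar> \<le> (c1 * C2+c2 * C1+C1 * C2) * (a * b) * w"
proof -
  have e: "(c1 * a+u) * (c2 * b+v) - c1 * c2 * (a * b) = c1 * a * v + c2 * b * u + u * v" by (simp add: algebra_simps)
  have 1: "\<bar>c1 * a * v\<bar> \<le> c1 * C2 * (a * b) * w"
  proof -
    have "\<bar>c1 * a * v\<bar> = c1 * a*\<bar>v\<bar>" using assms by (simp add: abs_mult)
    also have "\<dots> \<le> c1 * a * (C2 * b * w)" using assms by (intro mult_left_mono) auto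
    finally show ?thesis by (simp add: algebra_simps)
  qed
  have 2: "\<bar>c2 * b * u\<bar> \<le> c2 * C1 * (a * b) * w"
  proof -
    have "\<bar>c2 * b * u\<bar> = c2 * b*\<bar>u\<bar>" using assms by (simp add: abs_mult)
    also have "\<dots> \<le> c2 * b * (C1 * a * w)" using assms by (intro mult_left_mono) auto
    finally show ?thesis by (simp add: algebra_simps)
  qed
  have 3: "\<bar>u * v\<bar> \<le> C1 * C2 * (a * b) * w"
  proof -
    have "\<bar>u * v\<bar> = \<bar>u\<bar>*\<bar>v\<bar>" by (simp add: abs_mult)
    also have "\<dots> \<le> (C1 * a * w) * (C2 * b * w)" using assms by (intro mult_mono) auto
    also have "\<dots> = C1 * C2 * (a * b) * w * w" by (simp add: algebra_simps)
    also have "\<dots> \<le> C1 * C2 * (a * b) * w * 1" using assms by (intro mult_left_mono) auto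
    finally show ?thesis by simp
  qed
  have "\<bar>c1 * a * v + c2 * b * u + u * v\<bar> \<le> \<bar>c1 * a * v\<bar> + \<bar>c2 * b * u\<bar> + \<bar>u * v\<bar>" using abs_triangle_ineq[of "c1 * a * v + c2 * b * u" "u * v"] abs_triangle_ineq[of "c1 * a * v" "c2 * b * u"] by linarith
  moreover have "(c1 * C2+c2 * C1+C1 * C2) * (a * b) * w = c1 * C2 * (a * b) * w + c2 * C1 * (a * b) * w + C1 * C2 * (a * b) * w" by (simp add: algebra_simps)
  ultimately show ?thesis unfolding e using 1 2 3 by linarith
qed


lemma powr_d_le1: "0 < x \<Longrightarrow> x \<le> 1 \<Longrightarrow> 0 \<le> d \<Longrightarrow> x powr d \<le> (1::real)"
  using powr_mono2[of d x 1] by simp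

lemma PL_mult:
  assumes "0 \<le> d" "PL d f" "PL d g"
  shows "PL d (\<lambda>x. f x * g x)"
proof -
  obtain c1 k1 C1 e1 where h1: "c1>0" "C1>0" "e1>0" "e1\<le>1"
    "\<And>x. 0<x \<Longrightarrow> x\<le>e1 \<Longrightarrow> \<bar>f x - c1 * x powi k1\<bar> \<le> C1 * x powi k1 * x powr d"
    by (rule PLE[OF assms(2)]) metis
  obtain c2 k2 C2 e2 where h2: "c2>0" "C2>0" "e2>0" "e2\<le>1"
    "\<And>x. 0<x \<Longrightarrow> x\<le>e2 \<Longrightarrow> \<bar>g x - c2 * x powi k2\<bar> \<le> C2 * x powi k2 * x powr d"
    by (rule PLE[OF assms(3)]) metis
  show ?thesis
  proof (rule PLI[of "c1 * c2" "c1 * C2 + c2 * C1 + C1 * C2" "min e1 e2" _ "k1+k2"])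
    fix x :: real assume x: "0<x" "x\<le>min e1 e2"
    have s: "0 \<le> x powr d" "x powr d \<le> 1" using x h1 powr_d_le1[of x d] assms(1) by auto
    have "\<bar>(c1 * x powi k1 + (f x - c1 * x powi k1)) * (c2 * x powi k2 + (g x - c2 * x powi k2)) - c1 * c2 * (x powi k1 * x powi k2)\<bar>
       \<le> (c1 * C2 + c2 * C1 + C1 * C2) * (x powi k1 * x powi k2) * x powr d"
      using x h1 h2 s by (intro mult_aux) auto
    then show "\<bar>f x * g x - c1 * c2 * x powi (k1 + k2)\<bar> \<le> (c1 * C2 + c2 * C1 + C1 * C2) * x powi (k1 + k2) * x powr d"
      using x by (simp add: power_int_add mult.assoc)
  qed (use h1(1-3) h2(1-3) in \<open>auto intro!: add_pos_pos mult_pos_pos\<close>)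
qed

lemma inv_aux:
  fixes a c C w u :: real
  assumes "a>0" "c>0" "C>0" "w\<ge>0" "C * w \<le> c/2" "\<bar>u\<bar> \<le> C * a * w"
  shows "\<bar>1/(c * a+u) - (1/c) * (1/a)\<bar> \<le> (2 * C/c^2) * (1/a) * w"
proof -
  have "C * a * w \<le> (c/2) * a" using assms by (metis mult.commute mult.left_commute mult_right_mono less_imp_le)
  then have fl: "c * a + u \<ge> c * a/2" using assms by linarith
  have "c * a > 0" using assms by simp
  then have fp: "c * a + u > 0" using fl by linarith
  have eq: "1/(c * a+u) - (1/c) * (1/a) = - u / ((c * a + u) * (c * a))" using fp assms by (simp add: field_simps)
  have "\<bar>- u / ((c * a + u) * (c * a))\<bar> = \<bar>u\<bar> / ((c * a + u) * (c * a))" using fp assms by (simp add: abs_divide)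
  also have "\<dots> \<le> (C * a * w) / ((c * a/2) * (c * a))"
    using fp assms fl by (intro frac_le mult_right_mono mult_pos_pos) auto
  also have "\<dots> = (2 * C/c^2) * (1/a) * w" using assms by (simp add: field_simps power2_eq_square)
  finally show ?thesis using eq by simp
qed

lemma PL_inv:
  assumes "0 < d" "PL d f"
  shows "PL d (\<lambda>x. 1 / f x)"
proof -
  obtain c k C e1 where h: "c>0" "C>0" "e1>0" "e1\<le>1"
    "\<And>x. 0<x \<Longrightarrow> x\<le>e1 \<Longrightarrow> \<bar>f x - c * x powi k\<bar> \<le> C * x powi k * x powr d"
    by (rule PLE[OF assms(2)]) metis
  define e2 where "e2 = min e1 ((c/(2 * C)) powr (1/d))"
  have e2: "e2 > 0" unfolding e2_def using h by auto
  show ?thesis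
  proof (rule PLI[of "1/c" "2 * C/c^2" e2 _ "-k"])
    fix x :: real assume x: "0<x" "x\<le>e2"
    have "x powr d \<le> ((c/(2 * C)) powr (1/d)) powr d"
      using x assms(1) unfolding e2_def by (intro powr_mono2) auto
    also have "\<dots> = c/(2 * C)" using assms h by (simp add: powr_powr)
    finally have "C * x powr d \<le> c/2" using h by (simp add: field_simps)
    then have "\<bar>1/(c * x powi k + (f x - c * x powi k)) - (1/c) * (1/x powi k)\<bar> \<le> (2 * C/c^2) * (1/x powi k) * x powr d"
      using x h e2_def by (intro inv_aux) auto
    then show "\<bar>1 / f x - 1 / c * x powi - k\<bar> \<le> 2 * C / c\<^sup>2 * x powi - k * x powr d"
      by (simp add: power_int_minus divide_inverse)
  qed (use h e2 in auto)
qed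

lemma powi_gap:
  fixes x :: real
  assumes "0<x" "x\<le>1" "0\<le>d" "d\<le>1" "k1 < k2"
  shows "x powi k2 \<le> x powi k1 * x powr d"
proof -
  have "x powi k2 = x powi k1 * x powi (k2 - k1)" using assms by (simp add: power_int_add[symmetric])
  also have "x powi (k2 - k1) \<le> x powi 1" using assms by (intro power_int_decreasing) auto
  also have "x powi 1 = x powr 1" using assms by simp
  also have "x powr 1 \<le> x powr d" using assms by (intro powr_mono') auto
  finally show ?thesis using assms by (simp add: mult_left_mono)
qed

lemma PL_add_lt:
  assumes "0 \<le> d" "d \<le> 1" "c1>0" "C1>0" "e1>0" "e1\<le>1"
    "\<And>x. 0<x \<Longrightarrow> x\<le>e1 \<Longrightarrow> \<bar>f x - c1 * x powi k1\<bar> \<le> C1 * x powi k1 * x powr d"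
    "c2>0" "C2>0" "e2>0" "e2\<le>1"
    "\<And>x. 0<x \<Longrightarrow> x\<le>e2 \<Longrightarrow> \<bar>g x - c2 * x powi k2\<bar> \<le> C2 * x powi k2 * x powr d"
    "k1 < k2"
  shows "PL d (\<lambda>x. f x + g x)"
proof (rule PLI[of c1 "C1 + c2 + C2" "min e1 e2" _ k1])
  fix x :: real assume x: "0<x" "x\<le>min e1 e2"
  have g1: "x powi k2 \<le> x powi k1 * x powr d" using x assms by (intro powi_gap) auto
  have s: "0 \<le> x powr d" "x powr d \<le> 1" using x assms powr_d_le1[of x d] by auto
  have A: "\<bar>f x - c1 * x powi k1\<bar> \<le> C1 * x powi k1 * x powr d" using x assms(7) by auto
  have B: "\<bar>g x - c2 * x powi k2\<bar> \<le> C2 * x powi k1 * x powr d"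
  proof -
    have "\<bar>g x - c2 * x powi k2\<bar> \<le> C2 * x powi k2 * x powr d" using x assms(12) by auto
    also have "\<dots> \<le> C2 * (x powi k1 * x powr d) * 1" using g1 s assms x
      by (intro mult_mono) auto
    finally show ?thesis by (simp add: mult.assoc)
  qed
  have Cc: "c2 * x powi k2 \<le> c2 * x powi k1 * x powr d" using g1 assms by (simp add: mult.assoc)
  have "c2 * x powi k2 \<ge> 0" using assms x by simp
  then have D: "\<bar>c2 * x powi k2\<bar> \<le> c2 * x powi k1 * x powr d" using Cc by simp
  have E: "f x + g x - c1 * x powi k1 = (f x - c1 * x powi k1) + (g x - c2 * x powi k2) + c2 * x powi k2"
    by (simp add: algebra_simps)
  have E2: "(C1 + c2 + C2) * x powi k1 * x powr d = C1 * x powi k1 * x powr d + c2 * x powi k1 * x powr d + C2 * x powi k1 * x powr d"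
    by (simp add: algebra_simps)
  show "\<bar>f x + g x - c1 * x powi k1\<bar> \<le> (C1 + c2 + C2) * x powi k1 * x powr d"
    unfolding E E2 using A B D abs_triangle_ineq[of "f x - c1 * x powi k1 + (g x - c2 * x powi k2)" "c2 * x powi k2"]
      abs_triangle_ineq[of "f x - c1 * x powi k1" "g x - c2 * x powi k2"] by linarith
qed (use assms(3,4,5,8,9,10) in auto)

lemma PL_add:
  assumes "0 \<le> d" "d \<le> 1" "PL d f" "PL d g"
  shows "PL d (\<lambda>x. f x + g x)"
proof -
  obtain c1 k1 C1 e1 where h1: "c1>0" "C1>0" "e1>0" "e1\<le>1"
    "\<And>x. 0<x \<Longrightarrow> x\<le>e1 \<Longrightarrow> \<bar>f x - c1 * x powi k1\<bar> \<le> C1 * x powi k1 * x powr d"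
    by (rule PLE[OF assms(3)]) metis
  obtain c2 k2 C2 e2 where h2: "c2>0" "C2>0" "e2>0" "e2\<le>1"
    "\<And>x. 0<x \<Longrightarrow> x\<le>e2 \<Longrightarrow> \<bar>g x - c2 * x powi k2\<bar> \<le> C2 * x powi k2 * x powr d"
    by (rule PLE[OF assms(4)]) metis
  consider "k1 < k2" | "k2 < k1" | "k1 = k2" by linarith
  then show ?thesis
  proof cases
    case 1 show ?thesis using PL_add_lt[OF assms(1,2) h1 h2 1] .
  next
    case 2 show ?thesis using PL_add_lt[OF assms(1,2) h2 h1 2] by (simp add: add.commute)
  next
    case 3
    show ?thesis
    proof (rule PLI[of "c1+c2" "C1 + C2" "min e1 e2" _ k1])
      fix x :: real assume x: "0<x" "x\<le>min e1 e2"
      have A: "\<bar>f x - c1 * x powi k1\<bar> \<le> C1 * x powi k1 * x powr d" using x h1 by auto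
      have B: "\<bar>g x - c2 * x powi k1\<bar> \<le> C2 * x powi k1 * x powr d" using x h2 3 by auto
      have E: "f x + g x - (c1 + c2) * x powi k1 = (f x - c1 * x powi k1) + (g x - c2 * x powi k1)"
        by (simp add: algebra_simps)
      have E2: "(C1 + C2) * x powi k1 * x powr d = C1 * x powi k1 * x powr d + C2 * x powi k1 * x powr d"
        by (simp add: algebra_simps)
      show "\<bar>f x + g x - (c1 + c2) * x powi k1\<bar> \<le> (C1 + C2) * x powi k1 * x powr d"
        unfolding E E2 using A B abs_triangle_ineq[of "f x - c1 * x powi k1" "g x - c2 * x powi k1"] by linarith
    qed (use h1 h2 in auto)
  qed
qed

lemma PL_cong:
  assumes "PL d f" "e>0" "\<And>x. 0<x \<Longrightarrow> x\<le>e \<Longrightarrow> f x = g x"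
  shows "PL d g"
proof -
  obtain c1 k1 C1 e1 where h1: "c1>0" "C1>0" "e1>0" "e1\<le>1"
    "\<And>x. 0<x \<Longrightarrow> x\<le>e1 \<Longrightarrow> \<bar>f x - c1 * x powi k1\<bar> \<le> C1 * x powi k1 * x powr d"
    by (rule PLE[OF assms(1)]) metis
  show ?thesis
  proof (rule PLI[of c1 C1 "min e1 e" _ k1])
    fix x :: real assume x: "0 < x" "x \<le> min e1 e"
    then have "f x = g x" using assms(3) by simp
    then show "\<bar>g x - c1 * x powi k1\<bar> \<le> C1 * x powi k1 * x powr d" using h1(5)[of x] x by simp
  qed (use h1(1-3) assms(2) in auto)
qed

lemma Z0_cong:
  assumes "Z0 f" "e>0" "\<And>x. 0<x \<Longrightarrow> x\<le>e \<Longrightarrow> f x = g x"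
  shows "Z0 g"
proof -
  obtain e1 where e1: "e1>0" "\<And>x. 0<x \<Longrightarrow> x\<le>e1 \<Longrightarrow> f x = 0" using Z0E[OF assms(1)] by blast
  have "\<forall>x. 0<x \<and> x\<le>min e1 e \<longrightarrow> g x = 0"
  proof (intro allI impI)
    fix x assume x: "0<x \<and> x\<le>min e1 e"
    then have "f x = g x" using assms(3) by simp
    then show "g x = 0" using e1(2)[of x] x by simp
  qed
  then show ?thesis unfolding Z0_def using e1(1) assms(2) by (intro exI[of _ "min e1 e"]) auto
qed

lemma PZ_cong:
  assumes "PZ d f" "e>0" "\<And>x. 0<x \<Longrightarrow> x\<le>e \<Longrightarrow> f x = g x"
  shows "PZ d g"
  using assms PL_cong Z0_cong unfolding PZ_def by metis

lemma Z0_zero: "Z0 (\<lambda>x. 0)" unfolding Z0_def by (intro exI[of _ 1]) auto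

lemma PL_add_Z0: assumes "PL d f" "Z0 g" shows "PL d (\<lambda>x. f x + g x)"
proof -
  obtain e1 where "e1>0" "\<And>x. 0<x \<Longrightarrow> x\<le>e1 \<Longrightarrow> g x = 0" using Z0E[OF assms(2)] by blast
  then show ?thesis by (intro PL_cong[OF assms(1), of e1]) auto
qed

lemma PZ_add:
  assumes "0 \<le> d" "d \<le> 1" "PZ d f" "PZ d g"
  shows "PZ d (\<lambda>x. f x + g x)"
proof -
  have "Z0 f \<Longrightarrow> Z0 g \<Longrightarrow> Z0 (\<lambda>x. f x + g x)"
  proof -
    assume "Z0 f" "Z0 g"
    then obtain e1 e2 where "e1>0" "\<And>x. 0<x \<Longrightarrow> x\<le>e1 \<Longrightarrow> f x = 0"
      "e2>0" "\<And>x. 0<x \<Longrightarrow> x\<le>e2 \<Longrightarrow> g x = 0" using Z0E by metis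
    then show ?thesis unfolding Z0_def by (intro exI[of _ "min e1 e2"]) auto
  qed
  then show ?thesis using assms PL_add PL_add_Z0[of d f g] PL_add_Z0[of d g f] unfolding PZ_def
    by (metis (no_types, lifting) add.commute ext)
qed

lemma PZ_mult:
  assumes "0 \<le> d" "PZ d f" "PZ d g"
  shows "PZ d (\<lambda>x. f x * g x)"
proof -
  have "Z0 f \<Longrightarrow> Z0 (\<lambda>x. f x * g x)"
  proof -
    assume "Z0 f" then obtain e1 where "e1>0" "\<And>x. 0<x \<Longrightarrow> x\<le>e1 \<Longrightarrow> f x = 0" using Z0E by metis
    then show ?thesis unfolding Z0_def by (intro exI[of _ e1]) auto
  qed
  moreover have "Z0 g \<Longrightarrow> Z0 (\<lambda>x. f x * g x)"
  proof -
    assume "Z0 g" then obtain e1 where "e1>0" "\<And>x. 0<x \<Longrightarrow> x\<le>e1 \<Longrightarrow> g x = 0" using Z0E by metis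
    then show ?thesis unfolding Z0_def by (intro exI[of _ e1]) auto
  qed
  ultimately show ?thesis using assms PL_mult unfolding PZ_def by blast
qed

lemma PZ_div:
  assumes "0 < d" "PZ d f" "PL d g"
  shows "PZ d (\<lambda>x. f x / g x)"
proof -
  have "PZ d (\<lambda>x. 1 / g x)" using PL_inv[OF assms(1,3)] unfolding PZ_def by simp
  then have "PZ d (\<lambda>x. f x * (1 / g x))" using PZ_mult[of d f "\<lambda>x. 1 / g x"] assms(1,2) by simp
  then show ?thesis by simp
qed

lemma PZ_pos:
  assumes "PZ d f" "e>0" "\<And>x. 0<x \<Longrightarrow> x\<le>e \<Longrightarrow> f x > 0"
  shows "PL d f"
proof (rule ccontr)
  assume "\<not> PL d f"
  then have "Z0 f" using assms unfolding PZ_def by auto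
  then obtain e1 where "e1>0" "\<And>x. 0<x \<Longrightarrow> x\<le>e1 \<Longrightarrow> f x = 0" using Z0E by metis
  then have "f (min e e1) = 0" using assms by auto
  moreover have "f (min e e1) > 0" using assms \<open>e1>0\<close> by auto
  ultimately show False by simp
qed

lemma PZ_sum:
  assumes "0 \<le> d" "d \<le> 1" "finite A" "\<And>a. a \<in> A \<Longrightarrow> PZ d (f a)"
  shows "PZ d (\<lambda>x. \<Sum>a\<in>A. f a x)"
  using assms(3,4)
proof (induction A rule: finite_induct)
  case empty then show ?case using Z0_zero unfolding PZ_def by simp
next
  case (insert a A)
  have "PZ d (f a)" using insert.prems by simp
  then have "PZ d (\<lambda>x. f a x + (\<Sum>a\<in>A. f a x))" using insert.IH insert.prems PZ_add[OF assms(1,2)] by simp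
  then show ?case using insert by simp
qed

lemma PL_PZ: "PL d f \<Longrightarrow> PZ d f" unfolding PZ_def by simp

lemma PL_expansion:
  fixes f :: "real \<Rightarrow> real" and h :: "'a \<Rightarrow> int" and k K :: int
  assumes "0 < d" "d \<le> dl" "d \<le> 1" "c > 0" "finite A" "\<And>l. l \<in> A \<Longrightarrow> h l > k" "K \<ge> k"
    "G \<ge> 0" "ee > 0"
    "\<And>x. 0<x \<Longrightarrow> x\<le>ee \<Longrightarrow> \<bar>f x - (c * x powi k + (\<Sum>l\<in>A. b l * x powi h l))\<bar> \<le> G * x powr (real_of_int K + dl)"
  shows "PL d f"
proof (rule PLI[of c "(\<Sum>l\<in>A. \<bar>b l\<bar>) + G + 1" "min ee 1" _ k])
  fix x :: real assume x: "0 < x" "x \<le> min ee 1"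
  have R: "\<bar>f x - (c * x powi k + (\<Sum>l\<in>A. b l * x powi h l))\<bar> \<le> G * x powr (real_of_int K + dl)"
    using assms(10) x by simp
  have "x powr (real_of_int K + dl) \<le> x powr (real_of_int k + d)"
    using x assms by (intro powr_mono') auto
  also have "\<dots> = x powi k * x powr d" using x by (simp add: powr_add powr_real_of_int')
  finally have R2: "G * x powr (real_of_int K + dl) \<le> G * (x powi k * x powr d)"
    using assms(8) by (intro mult_left_mono) auto
  have S: "\<bar>\<Sum>l\<in>A. b l * x powi h l\<bar> \<le> (\<Sum>l\<in>A. \<bar>b l\<bar>) * (x powi k * x powr d)"
  proof -
    have "\<bar>\<Sum>l\<in>A. b l * x powi h l\<bar> \<le> (\<Sum>l\<in>A. \<bar>b l * x powi h l\<bar>)" by (rule sum_abs)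
    also have "\<dots> \<le> (\<Sum>l\<in>A. \<bar>b l\<bar> * (x powi k * x powr d))"
    proof (rule sum_mono)
      fix l assume l: "l \<in> A"
      have "x powi h l \<le> x powi k * x powr d" using x assms(1,3) assms(6)[OF l] by (intro powi_gap) auto
      moreover have "x powi h l \<ge> 0" using x by simp
      ultimately show "\<bar>b l * x powi h l\<bar> \<le> \<bar>b l\<bar> * (x powi k * x powr d)"
        by (simp add: abs_mult mult_left_mono)
    qed
    also have "\<dots> = (\<Sum>l\<in>A. \<bar>b l\<bar>) * (x powi k * x powr d)" by (simp add: sum_distrib_right)
    finally show ?thesis .
  qed
  have P: "0 \<le> x powi k * x powr d" using x by simp
  have E: "f x - c * x powi k = (f x - (c * x powi k + (\<Sum>l\<in>A. b l * x powi h l))) + (\<Sum>l\<in>A. b l * x powi h l)"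
    by simp
  have E2: "((\<Sum>l\<in>A. \<bar>b l\<bar>) + G + 1) * x powi k * x powr d
     = (\<Sum>l\<in>A. \<bar>b l\<bar>) * (x powi k * x powr d) + G * (x powi k * x powr d) + x powi k * x powr d"
    by (simp add: algebra_simps)
  show "\<bar>f x - c * x powi k\<bar> \<le> ((\<Sum>l\<in>A. \<bar>b l\<bar>) + G + 1) * x powi k * x powr d"
    unfolding E E2 using R R2 S P abs_triangle_ineq[of "f x - (c * x powi k + (\<Sum>l\<in>A. b l * x powi h l))" "\<Sum>l\<in>A. b l * x powi h l"]
    by linarith
next
  show "0 < (\<Sum>l\<in>A. \<bar>b l\<bar>) + G + 1" using assms(8) sum_nonneg[of A "\<lambda>l. \<bar>b l\<bar>"] by linarith
qed (use assms in auto)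

lemma PL_D:
  fixes f :: "real \<Rightarrow> real" and lm lp :: nat
  assumes "0 < d" "d \<le> dl" "d \<le> 1" "lm \<le> lp" "a lm > 0" "G \<ge> 0" "ee > 0"
    "\<And>x. 0<x \<and> x\<le>ee \<longrightarrow> \<bar>f x - (\<Sum>l=lm..lp. a l * x ^ l)\<bar> \<le> G * x powr (real lp + dl)"
  shows "PL d f"
proof (rule PL_expansion[where c="a lm" and A="{lm<..lp}" and h="\<lambda>l. int l" and k="int lm" and K="int lp" and G=G and ee=ee and b=a and dl=dl])
  fix x :: real assume x: "0 < x" "x \<le> ee"
  have "{lm..lp} = insert lm {lm<..lp}" using assms(4) by auto
  then have "(\<Sum>l=lm..lp. a l * x ^ l) = a lm * x ^ lm + (\<Sum>l\<in>{lm<..lp}. a l * x ^ l)"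
    by simp
  then show "\<bar>f x - (a lm * x powi int lm + (\<Sum>l\<in>{lm<..lp}. a l * x powi int l))\<bar> \<le> G * x powr (real_of_int (int lp) + dl)"
    using assms(8)[of x] x by (simp add: power_int_of_nat)
qed (use assms in auto)

lemma PL_E:
  fixes f :: "real \<Rightarrow> real" and mm mp :: int
  assumes "0 < d" "d \<le> dl" "d \<le> 1" "mm \<le> mp" "b mm > 0" "G \<ge> 0" "ee > 0"
    "\<And>x. 0<x \<and> x\<le>ee \<longrightarrow> \<bar>f x - (\<Sum>l=mm..mp. b l * x powi l)\<bar> \<le> G * x powr (real_of_int mp + dl)"
  shows "PL d f"
proof (rule PL_expansion[where c="b mm" and A="{mm<..mp}" and h="\<lambda>l. l" and k="mm" and K="mp" and G=G and ee=ee and b=b and dl=dl])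
  fix x :: real assume x: "0 < x" "x \<le> ee"
  have "{mm..mp} = insert mm {mm<..mp}" using assms(4) by auto
  then have "(\<Sum>l=mm..mp. b l * x powi l) = b mm * x powi mm + (\<Sum>l\<in>{mm<..mp}. b l * x powi l)"
    by simp
  then show "\<bar>f x - (b mm * x powi mm + (\<Sum>l\<in>{mm<..mp}. b l * x powi l))\<bar> \<le> G * x powr (real_of_int mp + dl)"
    using assms(8)[of x] x by simp
qed (use assms in auto)

lemma PL_add_PZ: assumes "0 \<le> d" "d \<le> 1" "PL d f" "PZ d g" shows "PL d (\<lambda>x. f x + g x)"
  using assms PL_add PL_add_Z0 unfolding PZ_def by blast

definition chain_ok :: "nat set \<Rightarrow> nat \<Rightarrow> (nat \<Rightarrow> nat \<Rightarrow> real) \<Rightarrow> bool" where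
  "chain_ok T i p \<longleftrightarrow> (\<forall>j\<in>T. \<forall>k\<in>T. p j k \<ge> 0) \<and> (\<forall>j\<in>T. (\<Sum>k\<in>T. p j k) = 1) \<and>
      (\<forall>U. U \<subseteq> T - {i} \<and> U \<noteq> {} \<longrightarrow> (\<exists>j\<in>U. \<exists>k\<in>T-U. p j k > 0))"

lemma elim_step:
  fixes p :: "nat \<Rightarrow> nat \<Rightarrow> real" and e H :: "nat \<Rightarrow> real"
  assumes fin: "finite T" and iT: "i \<in> T" and r: "r \<in> T" "r \<noteq> i" and ok: "chain_ok T i p"
    and eq: "\<forall>j\<in>T. H j = e j + (\<Sum>k\<in>T-{i}. p j k * H k)"
  defines "dd \<equiv> (\<Sum>k\<in>T-{r}. p r k)"
  defines "p' \<equiv> (\<lambda>j k. p j k + p j r * p r k / dd)"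
  defines "e' \<equiv> (\<lambda>j. e j + p j r * e r / dd)"
  shows "dd > 0" "chain_ok (T - {r}) i p'" "\<forall>j\<in>T-{r}. H j = e' j + (\<Sum>k\<in>T-{r}-{i}. p' j k * H k)"
proof -
  have nn: "\<And>j k. j \<in> T \<Longrightarrow> k \<in> T \<Longrightarrow> p j k \<ge> 0" and st: "\<And>j. j \<in> T \<Longrightarrow> (\<Sum>k\<in>T. p j k) = 1"
    and nc: "\<And>U. U \<subseteq> T - {i} \<Longrightarrow> U \<noteq> {} \<Longrightarrow> (\<exists>j\<in>U. \<exists>k\<in>T-U. p j k > 0)"
    using ok unfolding chain_ok_def by blast+
  obtain k0 where k0: "k0 \<in> T - {r}" "p r k0 > 0" using nc[of "{r}"] r by auto
  show ddp: "dd > 0" unfolding dd_def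
  proof -
    have "p r k0 \<le> (\<Sum>k\<in>T-{r}. p r k)" using k0 fin nn r by (intro member_le_sum) auto
    then show "(\<Sum>k\<in>T-{r}. p r k) > 0" using k0 by linarith
  qed
  have split: "\<And>j. j \<in> T \<Longrightarrow> (\<Sum>k\<in>T. p j k) = p j r + (\<Sum>k\<in>T-{r}. p j k)"
    by (rule sum.remove[OF fin r(1)])
  have prr: "p r r = 1 - dd" using split[of r] st[of r] r unfolding dd_def by simp
  have nn': "\<And>j k. j \<in> T \<Longrightarrow> k \<in> T \<Longrightarrow> p' j k \<ge> p j k" unfolding p'_def using nn ddp r by auto
  show "chain_ok (T - {r}) i p'" unfolding chain_ok_def
  proof (intro conjI ballI allI impI)
    fix j k assume "j \<in> T - {r}" "k \<in> T - {r}" then show "0 \<le> p' j k" using nn' nn by (meson DiffD1 order_trans)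
  next
    fix j assume j: "j \<in> T - {r}"
    have "(\<Sum>k\<in>T-{r}. p' j k) = (\<Sum>k\<in>T-{r}. p j k) + p j r / dd * dd"
      unfolding p'_def dd_def by (simp add: sum.distrib sum_distrib_left)
    also have "\<dots> = (\<Sum>k\<in>T-{r}. p j k) + p j r" using ddp by simp
    also have "\<dots> = 1" using split[of j] st[of j] j by simp
    finally show "(\<Sum>k\<in>T-{r}. p' j k) = 1" .
  next
    fix U assume U: "U \<subseteq> T - {r} - {i} \<and> U \<noteq> {}"
    then obtain j k where jk: "j \<in> U" "k \<in> T - U" "p j k > 0" using nc[of U] by blast
    show "\<exists>j\<in>U. \<exists>k\<in>T - {r} - U. 0 < p' j k"
    proof (cases "k = r")
      case False
      then show ?thesis using jk nn'[of j k] U by (intro bexI[of _ j] bexI[of _ k]) auto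
    next
      case True
      obtain j2 k2 where jk2: "j2 \<in> insert r U" "k2 \<in> T - insert r U" "p j2 k2 > 0"
        using nc[of "insert r U"] U r by blast
      show ?thesis
      proof (cases "j2 = r")
        case False
        then show ?thesis using jk2 nn'[of j2 k2] U by (intro bexI[of _ j2] bexI[of _ k2]) auto
      next
        case True2: True
        have "p j r * p r k2 / dd > 0" using jk jk2 True True2 ddp by simp
        moreover have "p j k2 \<ge> 0" using nn[of j k2] jk2 jk U by auto
        ultimately have "p' j k2 > 0" unfolding p'_def by linarith
        then show ?thesis using jk jk2 by (intro bexI[of _ j] bexI[of _ k2]) auto
      qed
    qed
  qed
  have Ti: "T - {i} = insert r (T - {r} - {i})" using r by auto
  have sumr: "\<And>f. (\<Sum>k\<in>T-{i}. f k) = f r + (\<Sum>k\<in>T-{r}-{i}. f k)"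
    using fin unfolding Ti by (subst sum.insert) auto
  have Hr: "H r = (e r + (\<Sum>k\<in>T-{r}-{i}. p r k * H k)) / dd"
  proof -
    have "H r = e r + (\<Sum>k\<in>T-{i}. p r k * H k)" using eq r by blast
    then have "H r = e r + p r r * H r + (\<Sum>k\<in>T-{r}-{i}. p r k * H k)" unfolding sumr by simp
    then have "dd * H r = e r + (\<Sum>k\<in>T-{r}-{i}. p r k * H k)" unfolding prr by (simp add: algebra_simps)
    then show ?thesis using ddp by (simp add: field_simps)
  qed
  show "\<forall>j\<in>T-{r}. H j = e' j + (\<Sum>k\<in>T-{r}-{i}. p' j k * H k)"
  proof
    fix j assume j: "j \<in> T - {r}"
    have "H j = e j + (\<Sum>k\<in>T-{i}. p j k * H k)" using eq j by blast
    also have "\<dots> = e j + p j r * H r + (\<Sum>k\<in>T-{r}-{i}. p j k * H k)" unfolding sumr by simp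
    also have "\<dots> = e j + p j r * e r / dd + (p j r / dd) * (\<Sum>k\<in>T-{r}-{i}. p r k * H k) + (\<Sum>k\<in>T-{r}-{i}. p j k * H k)"
      unfolding Hr by (simp add: field_simps add_divide_distrib)
    also have "\<dots> = e' j + (\<Sum>k\<in>T-{r}-{i}. p' j k * H k)"
      unfolding e'_def p'_def by (simp add: sum_distrib_left sum.distrib algebra_simps)
    finally show "H j = e' j + (\<Sum>k\<in>T-{r}-{i}. p' j k * H k)" .
  qed
qed

lemma elim:
  assumes d: "0 < d" "d \<le> 1"
  shows "finite T \<Longrightarrow> i \<in> T \<Longrightarrow> ee > 0 \<Longrightarrow>
    (\<forall>x. 0<x \<and> x\<le>ee \<longrightarrow> chain_ok T i (p x) \<and> (\<forall>j\<in>T. H x j = e x j + (\<Sum>k\<in>T-{i}. p x j k * H x k))) \<Longrightarrow>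
    (\<forall>j\<in>T. \<forall>k\<in>T. PZ d (\<lambda>x. p x j k)) \<Longrightarrow> (\<forall>j\<in>T. PL d (\<lambda>x. e x j)) \<Longrightarrow> PL d (\<lambda>x. H x i)"
proof (induction "card T" arbitrary: T p e rule: less_induct)
  case less
  note fin = less.prems(1) and iT = less.prems(2) and ee = less.prems(3) and C = less.prems(4)
    and Pp = less.prems(5) and Pe = less.prems(6)
  show ?case
  proof (cases "T = {i}")
    case True
    have "\<And>x. 0<x \<Longrightarrow> x\<le>ee \<Longrightarrow> e x i = H x i" using C True by auto
    then show ?thesis using Pe True PL_cong[of d "\<lambda>x. e x i" ee "\<lambda>x. H x i"] ee by auto
  next
    case False
    then obtain r where r: "r \<in> T" "r \<noteq> i" using iT by blast
    define dd where "dd = (\<lambda>x. \<Sum>k\<in>T-{r}. p x r k)"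
    define p' where "p' = (\<lambda>x j k. p x j k + p x j r * p x r k / dd x)"
    define e' where "e' = (\<lambda>x j. e x j + p x j r * e x r / dd x)"
    have step: "\<And>x. 0<x \<Longrightarrow> x\<le>ee \<Longrightarrow> dd x > 0 \<and> chain_ok (T - {r}) i (p' x) \<and>
        (\<forall>j\<in>T-{r}. H x j = e' x j + (\<Sum>k\<in>T-{r}-{i}. p' x j k * H x k))"
    proof -
      fix x :: real assume x: "0<x" "x\<le>ee"
      have ok: "chain_ok T i (p x)" and eq: "\<forall>j\<in>T. H x j = e x j + (\<Sum>k\<in>T-{i}. p x j k * H x k)"
        using C x by auto
      show "dd x > 0 \<and> chain_ok (T - {r}) i (p' x) \<and>
        (\<forall>j\<in>T-{r}. H x j = e' x j + (\<Sum>k\<in>T-{r}-{i}. p' x j k * H x k))"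
        using elim_step[OF fin iT r ok eq] unfolding dd_def p'_def e'_def by blast
    qed
    have PZdd: "PZ d dd" unfolding dd_def using Pp r fin d by (intro PZ_sum) auto
    have PLdd: "PL d dd" using PZ_pos[OF PZdd ee] step by blast
    have Pp': "\<forall>j\<in>T-{r}. \<forall>k\<in>T-{r}. PZ d (\<lambda>x. p' x j k)"
    proof (intro ballI)
      fix j k assume jk: "j \<in> T-{r}" "k \<in> T-{r}"
      have "PZ d (\<lambda>x. p x j r * p x r k)" using Pp jk r d by (intro PZ_mult) auto
      then have "PZ d (\<lambda>x. p x j r * p x r k / dd x)" using PZ_div[OF d(1) _ PLdd] by blast
      then show "PZ d (\<lambda>x. p' x j k)" unfolding p'_def using Pp jk d PZ_add[of d "\<lambda>x. p x j k"] by auto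
    qed
    have Pe': "\<forall>j\<in>T-{r}. PL d (\<lambda>x. e' x j)"
    proof
      fix j assume j: "j \<in> T-{r}"
      have "PZ d (\<lambda>x. p x j r * e x r)" using Pp Pe j r d PL_PZ by (intro PZ_mult) auto
      then have "PZ d (\<lambda>x. p x j r * e x r / dd x)" using PZ_div[OF d(1) _ PLdd] by blast
      then show "PL d (\<lambda>x. e' x j)" unfolding e'_def using Pe j d PL_add_PZ[of d "\<lambda>x. e x j"] by auto
    qed
    have lt: "card (T - {r}) < card T" by (rule card_Diff1_less[OF fin r(1)])
    show ?thesis
      using less.hyps[OF lt, of p' e'] fin iT r ee step Pp' Pe' by auto
  qed
qed

fun pp :: "(nat \<Rightarrow> nat \<Rightarrow> real) \<Rightarrow> nat list \<Rightarrow> real" where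
  "pp p [] = 1" | "pp p [x] = 1" | "pp p (x # y # r) = p x y * pp p (y # r)"

fun pt :: "(nat \<Rightarrow> nat \<Rightarrow> real) \<Rightarrow> (nat \<Rightarrow> nat \<Rightarrow> real) \<Rightarrow> nat list \<Rightarrow> real" where
  "pt p e [] = 0" | "pt p e [x] = 0" | "pt p e (x # y # r) = e x y * pp p (y # r) + p x y * pt p e (y # r)"

definition ptime :: "(nat \<Rightarrow> nat \<Rightarrow> real) \<Rightarrow> (nat \<Rightarrow> nat \<Rightarrow> real) \<Rightarrow> nat list \<Rightarrow> real" where
  "ptime p e ls = (\<Sum>k<length ls - 1. e (ls ! k) (ls ! Suc k) *
        (\<Prod>m\<in>{..<length ls - 1} - {k}. p (ls ! m) (ls ! Suc m)))"

lemma path_time_ptime: "path_time Q eps ls = ptime (smp Q eps) (sme Q eps) ls"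
  unfolding path_time_def ptime_def by simp

lemma pp_eq: "pp p ls = (\<Prod>m<length ls - 1. p (ls ! m) (ls ! Suc m))"
proof (induction p ls rule: pp.induct)
  case (3 p x y r)
  have "(\<Prod>m<length (x # y # r) - 1. p ((x # y # r) ! m) ((x # y # r) ! Suc m))
      = p x y * (\<Prod>m<length (y # r) - 1. p ((y # r) ! m) ((y # r) ! Suc m))"
    by (simp add: prod.lessThan_Suc_shift del: prod.lessThan_Suc)
  then show ?case using 3 by simp
qed auto

lemma prod_remove_Suc:
  fixes g :: "nat \<Rightarrow> real"
  assumes "k < n"
  shows "(\<Prod>m\<in>{..<Suc n} - {Suc k}. g m) = g 0 * (\<Prod>m\<in>{..<n} - {k}. g (Suc m))"
proof -
  have e: "{..<Suc n} - {Suc k} = insert 0 (Suc ` ({..<n} - {k}))"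
    by (auto simp: image_iff less_Suc_eq_0_disj)
  have "(\<Prod>m\<in>{..<Suc n} - {Suc k}. g m) = g 0 * (\<Prod>m\<in>Suc ` ({..<n} - {k}). g m)"
    unfolding e by (subst prod.insert) auto
  also have "(\<Prod>m\<in>Suc ` ({..<n} - {k}). g m) = (\<Prod>m\<in>{..<n} - {k}. g (Suc m))"
    by (subst prod.reindex) auto
  finally show ?thesis .
qed

lemma prod_remove_0:
  fixes g :: "nat \<Rightarrow> real"
  shows "(\<Prod>m\<in>{..<Suc n} - {0}. g m) = (\<Prod>m<n. g (Suc m))"
proof -
  have e: "{..<Suc n} - {0} = Suc ` {..<n}"
    by (auto simp: image_iff less_Suc_eq_0_disj)
  show ?thesis unfolding e by (subst prod.reindex) auto
qed

lemma ptime_eq: "ptime p e ls = pt p e ls"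
proof (induction p e ls rule: pt.induct)
  case (3 p e x y r)
  define n where "n = length r"
  define g where "g = (\<lambda>m. p ((x # y # r) ! m) ((x # y # r) ! Suc m))"
  have L: "length (x # y # r) - 1 = Suc n" "length (y # r) - 1 = n" unfolding n_def by simp_all
  have "ptime p e (x # y # r) = (\<Sum>k<Suc n. e ((x # y # r) ! k) ((x # y # r) ! Suc k) * (\<Prod>m\<in>{..<Suc n} - {k}. g m))"
    unfolding ptime_def L g_def by simp
  also have "\<dots> = e x y * (\<Prod>m\<in>{..<Suc n} - {0}. g m)
      + (\<Sum>k<n. e ((y # r) ! k) ((y # r) ! Suc k) * (\<Prod>m\<in>{..<Suc n} - {Suc k}. g m))"
    by (simp add: sum.lessThan_Suc_shift del: sum.lessThan_Suc)
  also have "(\<Prod>m\<in>{..<Suc n} - {0}. g m) = pp p (y # r)"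
    unfolding prod_remove_0 pp_eq L g_def by simp
  also have "(\<Sum>k<n. e ((y # r) ! k) ((y # r) ! Suc k) * (\<Prod>m\<in>{..<Suc n} - {Suc k}. g m))
      = (\<Sum>k<n. e ((y # r) ! k) ((y # r) ! Suc k) * (g 0 * (\<Prod>m\<in>{..<n} - {k}. g (Suc m))))"
    by (intro sum.cong refl) (simp add: prod_remove_Suc)
  also have "\<dots> = p x y * ptime p e (y # r)"
    unfolding ptime_def L g_def by (simp add: sum_distrib_left algebra_simps)
  finally show ?case using 3 by simp
qed (auto simp: ptime_def)

definition Lst :: "nat set \<Rightarrow> nat \<Rightarrow> nat list set" where
  "Lst S k = {xs. set xs \<subseteq> S \<and> length xs = k}"

lemma Lst_finite: "finite S \<Longrightarrow> finite (Lst S k)"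
  unfolding Lst_def by (rule finite_lists_length_eq)

lemma sum_Lst_Suc:
  assumes "finite S"
  shows "(\<Sum>xs\<in>Lst S (Suc k). f xs) = (\<Sum>r\<in>S. \<Sum>xs\<in>Lst S k. f (r # xs))"
proof -
  have e: "Lst S (Suc k) = (\<lambda>(r, xs). r # xs) ` (S \<times> Lst S k)"
  proof
    show "Lst S (Suc k) \<subseteq> (\<lambda>(r, xs). r # xs) ` (S \<times> Lst S k)"
    proof
      fix ys assume "ys \<in> Lst S (Suc k)"
      then obtain r xs where "ys = r # xs" "r \<in> S" "xs \<in> Lst S k" unfolding Lst_def
        by (cases ys) auto
      then show "ys \<in> (\<lambda>(r, xs). r # xs) ` (S \<times> Lst S k)" by force
    qed
  qed (auto simp: Lst_def)
  have inj: "inj_on (\<lambda>(r, xs). r # xs) (S \<times> Lst S k)" by (auto simp: inj_on_def)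
  have "(\<Sum>xs\<in>Lst S (Suc k). f xs) = (\<Sum>z\<in>S \<times> Lst S k. f (fst z # snd z))"
    unfolding e sum.reindex[OF inj] by (intro sum.cong refl) auto
  also have "\<dots> = (\<Sum>r\<in>S. \<Sum>xs\<in>Lst S k. f (r # xs))"
    by (simp add: sum.cartesian_product case_prod_beta)
  finally show ?thesis .
qed

lemma Lst_0: "Lst S 0 = {[]}" unfolding Lst_def by auto

lemma summable_Suc_pow:
  fixes \<rho> :: real
  assumes "0 \<le> \<rho>" "\<rho> < 1"
  shows "summable (\<lambda>k. (real k + 1) * \<rho> ^ k)"
proof -
  define \<sigma> where "\<sigma> = sqrt \<rho>"
  have s: "0 \<le> \<sigma>" "\<sigma> < 1" using assms unfolding \<sigma>_def by auto
  have sq: "\<rho> ^ k = \<sigma> ^ k * \<sigma> ^ k" for k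
    using assms unfolding \<sigma>_def by (simp add: power_mult_distrib[symmetric])
  have lim: "(\<lambda>n. of_nat n * \<sigma> ^ n) \<longlonglongrightarrow> (0::real)"
    using s by (intro powser_times_n_limit_0) auto
  have ev: "eventually (\<lambda>n. of_nat n * \<sigma> ^ n < (1::real)) sequentially"
    using order_tendstoD(2)[OF lim, of 1] by simp
  have "eventually (\<lambda>k. norm ((real k + 1) * \<rho> ^ k) \<le> \<sigma> ^ k + \<rho> ^ k) sequentially"
    using ev
  proof eventually_elim
    case (elim k)
    have "(real k + 1) * \<rho> ^ k = (real k * \<sigma> ^ k) * \<sigma> ^ k + \<rho> ^ k"
      unfolding sq by (simp add: algebra_simps)
    also have "\<dots> \<le> 1 * \<sigma> ^ k + \<rho> ^ k"
      using elim s by (intro add_mono mult_right_mono) auto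
    finally show ?case using assms by simp
  qed
  moreover have "summable (\<lambda>k. \<sigma> ^ k + \<rho> ^ k)"
    using s assms by (intro summable_add summable_geometric) auto
  ultimately show ?thesis by (rule summable_comparison_test_ev)
qed

lemma first_exit:
  "P (l 0) \<Longrightarrow> \<not> P (l n) \<Longrightarrow> \<exists>m<n. P (l m) \<and> \<not> P (l (Suc m))"
proof (induction n)
  case 0 then show ?case by simp
next
  case (Suc n)
  then show ?case by (cases "P (l n)") (auto intro: less_SucI)
qed

locale mc =
  fixes X :: "nat set" and i :: nat and p e :: "nat \<Rightarrow> nat \<Rightarrow> real" and M :: real
  assumes finX: "finite X" and iX: "i \<in> X"
    and pnn: "\<And>j k. j \<in> X \<Longrightarrow> k \<in> X \<Longrightarrow> 0 \<le> p j k"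
    and st: "\<And>j. j \<in> X \<Longrightarrow> (\<Sum>k\<in>X. p j k) = 1"
    and enn: "\<And>j k. j \<in> X \<Longrightarrow> k \<in> X \<Longrightarrow> 0 \<le> e j k"
    and eM: "\<And>j k. j \<in> X \<Longrightarrow> k \<in> X \<Longrightarrow> e j k \<le> M * p j k"
    and M0: "0 \<le> M"
    and reach: "\<And>j. j \<in> X \<Longrightarrow> \<exists>n l. l 0 = j \<and> l (Suc n) = i \<and> (\<forall>m\<le>Suc n. l m \<in> X) \<and>
                   (\<forall>m\<le>n. p (l m) (l (Suc m)) > 0)"
begin

fun R :: "nat \<Rightarrow> nat \<Rightarrow> real" where
  "R 0 j = 1" | "R (Suc k) j = (\<Sum>r\<in>X-{i}. p j r * R k r)"

definition Qs :: "nat \<Rightarrow> nat \<Rightarrow> real" where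
  "Qs k j = (\<Sum>xs\<in>Lst (X-{i}) k. pp p (j # xs @ [i]))"

definition Gs :: "nat \<Rightarrow> nat \<Rightarrow> real" where
  "Gs k j = (\<Sum>xs\<in>Lst (X-{i}) k. pt p e (j # xs @ [i]))"

lemma finS: "finite (X - {i})" using finX by simp

lemma Qs_0: "Qs 0 j = p j i" unfolding Qs_def Lst_0 by simp

lemma Qs_Suc: "Qs (Suc k) j = (\<Sum>r\<in>X-{i}. p j r * Qs k r)"
  unfolding Qs_def sum_Lst_Suc[OF finS] by (simp add: sum_distrib_left)

lemma Gs_0: "Gs 0 j = e j i" unfolding Gs_def Lst_0 by simp

lemma Gs_Suc: "Gs (Suc k) j = (\<Sum>r\<in>X-{i}. e j r * Qs k r + p j r * Gs k r)"
  unfolding Gs_def Qs_def sum_Lst_Suc[OF finS] by (simp add: sum_distrib_left sum.distrib)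

lemma sumS: "j \<in> X \<Longrightarrow> (\<Sum>r\<in>X-{i}. p j r) = 1 - p j i"
  using st[of j] sum.remove[OF finX iX, of "p j"] by simp

lemma sumS_e: "(\<Sum>r\<in>X. e j r) = e j i + (\<Sum>r\<in>X-{i}. e j r)"
  using sum.remove[OF finX iX, of "e j"] by simp

lemma R_nn: "j \<in> X \<Longrightarrow> 0 \<le> R k j"
proof (induction k arbitrary: j)
  case (Suc k) then show ?case using pnn iX by (auto intro!: sum_nonneg)
qed simp

lemma R_le1: "j \<in> X \<Longrightarrow> R k j \<le> 1"
proof (induction k arbitrary: j)
  case (Suc k)
  have "R (Suc k) j \<le> (\<Sum>r\<in>X-{i}. p j r * 1)"
    unfolding R.simps
  proof (intro sum_mono mult_left_mono)
    fix r assume "r \<in> X - {i}"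
    then show "R k r \<le> 1" "0 \<le> p j r" using Suc pnn by auto
  qed
  also have "\<dots> = 1 - p j i" using sumS[OF Suc.prems] by simp
  also have "\<dots> \<le> 1" using pnn[OF Suc.prems iX] by simp
  finally show ?case .
qed simp

lemma Qs_nn: "j \<in> X \<Longrightarrow> 0 \<le> Qs k j"
proof (induction k arbitrary: j)
  case 0 then show ?case using pnn iX by (simp add: Qs_0)
next
  case (Suc k) then show ?case using pnn by (auto simp: Qs_Suc intro!: sum_nonneg)
qed

lemma R_Qs: "j \<in> X \<Longrightarrow> Qs k j = R k j - R (Suc k) j"
proof (induction k arbitrary: j)
  case 0 then show ?case using sumS[OF 0] by (simp add: Qs_0)
next
  case (Suc k)
  have "Qs (Suc k) j = (\<Sum>r\<in>X-{i}. p j r * (R k r - R (Suc k) r))"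
    unfolding Qs_Suc using Suc.IH by (intro sum.cong refl) auto
  also have "\<dots> = R (Suc k) j - R (Suc (Suc k)) j"
    by (simp only: R.simps right_diff_distrib sum_subtractf)
  finally show ?case .
qed

lemma R_dec: "j \<in> X \<Longrightarrow> R (Suc k) j \<le> R k j"
  using R_Qs[of j k] Qs_nn[of j k] by simp

lemma R_antimono: "j \<in> X \<Longrightarrow> k1 \<le> k2 \<Longrightarrow> R k2 j \<le> R k1 j"
  using lift_Suc_antimono_le[of "\<lambda>k. R k j" k1 k2] R_dec by blast

lemma Qs_le_R: "j \<in> X \<Longrightarrow> Qs k j \<le> R k j"
  using R_Qs[of j k] R_nn[of j "Suc k"] by simp

lemma Gs_nn: "j \<in> X \<Longrightarrow> 0 \<le> Gs k j"
proof (induction k arbitrary: j)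
  case 0 then show ?case using enn iX by (simp add: Gs_0)
next
  case (Suc k) then show ?case using pnn enn Qs_nn by (auto simp: Gs_Suc intro!: sum_nonneg add_nonneg_nonneg mult_nonneg_nonneg)
qed

lemma Gs_le: "j \<in> X \<Longrightarrow> Gs k j \<le> M * (real k + 1) * R k j"
proof (induction k arbitrary: j)
  case 0
  have "e j i \<le> M * p j i" using eM[OF 0 iX] .
  also have "p j i = Qs 0 j" by (simp add: Qs_0)
  also have "M * Qs 0 j \<le> M * R 0 j" using Qs_le_R[OF 0, of 0] M0 by (rule mult_left_mono)
  finally show ?case by (simp add: Gs_0)
next
  case (Suc k)
  have "Gs (Suc k) j \<le> (\<Sum>r\<in>X-{i}. M * p j r * R k r + p j r * (M * (real k + 1) * R k r))"
    unfolding Gs_Suc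
  proof (intro sum_mono add_mono)
    fix r assume r: "r \<in> X - {i}"
    then have rX: "r \<in> X" by simp
    show "e j r * Qs k r \<le> M * p j r * R k r"
      using eM[OF Suc.prems rX] Qs_le_R[OF rX] Qs_nn[OF rX] enn[OF Suc.prems rX] M0 pnn[OF Suc.prems rX]
      by (intro mult_mono) auto
    show "p j r * Gs k r \<le> p j r * (M * (real k + 1) * R k r)"
      using Suc.IH[OF rX] pnn[OF Suc.prems rX] by (intro mult_left_mono) auto
  qed
  also have "\<dots> = M * (real (Suc k) + 1) * R (Suc k) j"
    by (simp add: sum_distrib_left algebra_simps)
  finally show ?case .
qed


lemma R_path: "\<forall>m\<le>Suc n. l m \<in> X \<Longrightarrow> l (Suc n) = i \<Longrightarrow> \<forall>m\<le>n. p (l m) (l (Suc m)) > 0 \<Longrightarrow> R (Suc n) (l 0) < 1"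
proof (induction n arbitrary: l)
  case 0
  have "R (Suc 0) (l 0) \<le> (\<Sum>r\<in>X-{i}. p (l 0) r * 1)" by simp
  also have "\<dots> = 1 - p (l 0) i" using sumS 0 by auto
  also have "\<dots> < 1" using 0 by auto
  finally show ?case .
next
  case (Suc n)
  have l0: "l 0 \<in> X" using Suc.prems by auto
  show ?case
  proof (cases "l 1 = i")
    case True
    have "p (l 0) (l (Suc 0)) > 0" using Suc.prems(3) by auto
    then have "p (l 0) i > 0" using True by simp
    moreover have "R (Suc 0) (l 0) = 1 - p (l 0) i" using sumS l0 by simp
    ultimately have "R (Suc 0) (l 0) < 1" by linarith
    moreover have "R (Suc (Suc n)) (l 0) \<le> R (Suc 0) (l 0)" using R_antimono[OF l0, of "Suc 0" "Suc (Suc n)"] by simp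
    ultimately show ?thesis by linarith
  next
    case False
    have l1: "l 1 \<in> X - {i}" using False Suc.prems by auto
    have IH: "R (Suc n) (l 1) < 1" using Suc.IH[of "\<lambda>m. l (Suc m)"] Suc.prems by auto
    have "R (Suc (Suc n)) (l 0) = (\<Sum>r\<in>X-{i}. p (l 0) r * R (Suc n) r)" by (simp only: R.simps(2))
    also have "\<dots> < (\<Sum>r\<in>X-{i}. p (l 0) r * 1)"
    proof (rule sum_strict_mono_ex1[OF finS])
      show "\<forall>r\<in>X - {i}. p (l 0) r * R (Suc n) r \<le> p (l 0) r * 1"
      proof
        fix r assume r: "r \<in> X - {i}"
        have a: "R (Suc n) r \<le> 1" by (rule R_le1) (use r in auto)
        have b: "0 \<le> p (l 0) r" using pnn l0 r by auto
        show "p (l 0) r * R (Suc n) r \<le> p (l 0) r * 1" using a b by (rule mult_left_mono)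
      qed
      have "p (l 0) (l 1) > 0" using Suc.prems by auto
      then show "\<exists>r\<in>X - {i}. p (l 0) r * R (Suc n) r < p (l 0) r * 1"
        using l1 IH by (intro bexI[of _ "l 1"]) auto
    qed
    also have "\<dots> = 1 - p (l 0) i" using sumS l0 by auto
    also have "\<dots> \<le> 1" using pnn l0 iX by auto
    finally show ?thesis .
  qed
qed

lemma R_mult: "(\<And>r. r \<in> X \<Longrightarrow> R m r \<le> B) \<Longrightarrow> 0 \<le> B \<Longrightarrow> j \<in> X \<Longrightarrow> R (k + m) j \<le> B * R k j"
proof (induction k arbitrary: j)
  case 0 then show ?case by simp
next
  case (Suc k)
  have "R (Suc k + m) j = (\<Sum>r\<in>X-{i}. p j r * R (k + m) r)" by simp
  also have "\<dots> \<le> (\<Sum>r\<in>X-{i}. p j r * (B * R k r))"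
    using Suc pnn by (intro sum_mono mult_left_mono) auto
  also have "\<dots> = B * R (Suc k) j" by (simp add: sum_distrib_left algebra_simps)
  finally show ?case .
qed

lemma R_decay: "\<exists>\<rho> C. 0 < \<rho> \<and> \<rho> < 1 \<and> 0 < C \<and> (\<forall>j\<in>X. \<forall>k. R k j \<le> C * \<rho> ^ k)"
proof -
  have ex: "\<forall>j\<in>X. \<exists>n. R (Suc n) j < 1"
  proof
    fix j assume j: "j \<in> X"
    obtain n l where "l 0 = j" "l (Suc n) = i" "\<forall>m\<le>Suc n. l m \<in> X" "\<forall>m\<le>n. p (l m) (l (Suc m)) > 0"
      using reach[OF j] by blast
    then show "\<exists>n. R (Suc n) j < 1" using R_path by blast
  qed
  define nf where "nf = (\<lambda>j. SOME n. R (Suc n) j < 1)"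
  have nf: "\<And>j. j \<in> X \<Longrightarrow> R (Suc (nf j)) j < 1" unfolding nf_def using ex someI_ex by metis
  define N0 where "N0 = Suc (Max (nf ` X))"
  have N0: "N0 > 0" unfolding N0_def by simp
  have RN0: "\<And>j. j \<in> X \<Longrightarrow> R N0 j < 1"
  proof -
    fix j assume j: "j \<in> X"
    have "nf j \<le> Max (nf ` X)" using finX j by simp
    then have "R N0 j \<le> R (Suc (nf j)) j" unfolding N0_def by (intro R_antimono[OF j]) simp
    then show "R N0 j < 1" using nf[OF j] by linarith
  qed
  define q where "q = max (Max ((\<lambda>j. R N0 j) ` X)) (1/2)"
  have "Max ((\<lambda>j. R N0 j) ` X) < 1" using finX iX RN0 by (subst Max_less_iff) auto
  then have q: "0 < q" "q < 1" unfolding q_def by auto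
  have Rq: "\<And>j. j \<in> X \<Longrightarrow> R N0 j \<le> q"
  proof -
    fix j assume j: "j \<in> X"
    have "R N0 j \<le> Max ((\<lambda>j. R N0 j) ` X)" using finX j by (intro Max_ge) auto
    then show "R N0 j \<le> q" unfolding q_def by linarith
  qed
  have Rpow: "\<And>j a. j \<in> X \<Longrightarrow> R (a * N0) j \<le> q ^ a"
  proof -
    fix j a assume j: "j \<in> X"
    show "R (a * N0) j \<le> q ^ a" using j
    proof (induction a arbitrary: j)
      case (Suc a)
      have "R (a * N0 + N0) j \<le> q * R (a * N0) j" using R_mult[of N0 q j "a * N0"] Rq q Suc by auto
      also have "\<dots> \<le> q * q ^ a" using Suc q by (intro mult_left_mono) auto
      finally show ?case by (simp add: add.commute)
    qed simp
  qed
  define \<rho> where "\<rho> = root N0 q"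
  have \<rho>: "0 < \<rho>" "\<rho> < 1" "\<rho> ^ N0 = q" unfolding \<rho>_def using q N0 by (auto simp: real_root_lt_1_iff real_root_pow_pos)
  have "\<forall>j\<in>X. \<forall>k. R k j \<le> (1/q) * \<rho> ^ k"
  proof (intro ballI allI)
    fix j k assume j: "j \<in> X"
    define a where "a = k div N0"
    define b where "b = k mod N0"
    have kab: "k = a * N0 + b" unfolding a_def b_def by simp
    have b: "b \<le> N0" unfolding b_def using N0 by (simp add: less_imp_le)
    have "R k j \<le> R (a * N0) j" using R_antimono j kab by simp
    also have "\<dots> \<le> q ^ a" using Rpow j by simp
    also have "q ^ a = (1/q) * (q ^ a * \<rho> ^ N0)" using q \<rho> by simp
    also have "\<dots> \<le> (1/q) * (q ^ a * \<rho> ^ b)"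
      using q \<rho> b by (intro mult_left_mono power_decreasing) auto
    also have "q ^ a * \<rho> ^ b = \<rho> ^ k" unfolding kab using \<rho> by (simp add: power_add power_mult mult.commute)
    finally show "R k j \<le> (1/q) * \<rho> ^ k" .
  qed
  then show ?thesis using \<rho> q by (intro exI[of _ \<rho>] exI[of _ "1/q"]) auto
qed


definition H :: "nat \<Rightarrow> real" where "H j = (\<Sum>k. Gs k j)"

lemma decay_facts: obtains \<rho> C where "0 < \<rho>" "\<rho> < 1" "0 < C" "\<And>j k. j \<in> X \<Longrightarrow> R k j \<le> C * \<rho> ^ k"
  using R_decay by blast

lemma Gs_summable: "j \<in> X \<Longrightarrow> summable (\<lambda>k. Gs k j)"
proof -
  assume j: "j \<in> X"
  obtain \<rho> C where d: "0 < \<rho>" "\<rho> < 1" "0 < C" "\<And>j k. j \<in> X \<Longrightarrow> R k j \<le> C * \<rho> ^ k"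
    using decay_facts by blast
  have "summable (\<lambda>k. (M * C) * ((real k + 1) * \<rho> ^ k))"
    using summable_Suc_pow[of \<rho>] d by (intro summable_mult) auto
  moreover have "norm (Gs k j) \<le> (M * C) * ((real k + 1) * \<rho> ^ k)" for k
  proof -
    have "norm (Gs k j) = Gs k j" using Gs_nn[OF j] by simp
    also have "\<dots> \<le> M * (real k + 1) * R k j" using Gs_le[OF j] .
    also have "\<dots> \<le> M * (real k + 1) * (C * \<rho> ^ k)" using d(4)[OF j] M0 by (intro mult_left_mono) auto
    finally show ?thesis by (simp add: algebra_simps)
  qed
  ultimately show ?thesis by (rule summable_comparison_test'[where N=0])
qed

lemma R_lim: "j \<in> X \<Longrightarrow> (\<lambda>k. R k j) \<longlonglongrightarrow> 0"
proof -
  assume j: "j \<in> X"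
  obtain \<rho> C where d: "0 < \<rho>" "\<rho> < 1" "0 < C" "\<And>j k. j \<in> X \<Longrightarrow> R k j \<le> C * \<rho> ^ k"
    using decay_facts by blast
  have l: "(\<lambda>k. \<rho> ^ k) \<longlonglongrightarrow> 0" by (rule LIMSEQ_realpow_zero) (use d(1,2) in linarith)+
  have l2: "(\<lambda>k. C * \<rho> ^ k) \<longlonglongrightarrow> C * 0" using l by (rule tendsto_mult_left)
  have b1: "\<forall>\<^sub>F k in sequentially. (0::real) \<le> R k j" using R_nn[OF j] by simp
  have b2: "\<forall>\<^sub>F k in sequentially. R k j \<le> C * \<rho> ^ k" using d(4)[OF j] by simp
  show ?thesis using tendsto_sandwich[OF b1 b2 tendsto_const] l2 by simp
qed

lemma Qs_sums: "j \<in> X \<Longrightarrow> (\<lambda>k. Qs k j) sums 1"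
proof -
  assume j: "j \<in> X"
  have "(\<lambda>k. R k j - R (Suc k) j) sums (R 0 j - 0)" by (rule telescope_sums'[OF R_lim[OF j]])
  then show ?thesis using R_Qs[OF j] by simp
qed

lemma H_nn: "j \<in> X \<Longrightarrow> 0 \<le> H j"
  unfolding H_def using Gs_summable Gs_nn by (intro suminf_nonneg) auto

lemma H_eq: "j \<in> X \<Longrightarrow> H j = (\<Sum>k\<in>X. e j k) + (\<Sum>r\<in>X-{i}. p j r * H r)"
proof -
  assume j: "j \<in> X"
  have sG: "\<And>r. r \<in> X - {i} \<Longrightarrow> summable (\<lambda>k. Gs k r)" using Gs_summable by auto
  have sQ: "\<And>r. r \<in> X - {i} \<Longrightarrow> summable (\<lambda>k. Qs k r)" using Qs_sums sums_summable by blast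
  have sQ1: "\<And>r. r \<in> X - {i} \<Longrightarrow> (\<Sum>k. Qs k r) = 1" using Qs_sums sums_unique by (metis DiffD1)
  have "H j = Gs 0 j + (\<Sum>k. Gs (Suc k) j)"
    unfolding H_def using suminf_split_head[OF Gs_summable[OF j]] by simp
  also have "(\<Sum>k. Gs (Suc k) j) = (\<Sum>k. \<Sum>r\<in>X-{i}. e j r * Qs k r + p j r * Gs k r)"
    by (simp only: Gs_Suc)
  also have "\<dots> = (\<Sum>r\<in>X-{i}. \<Sum>k. e j r * Qs k r + p j r * Gs k r)"
    using sG sQ by (intro suminf_sum summable_add summable_mult) auto
  also have "\<dots> = (\<Sum>r\<in>X-{i}. e j r + p j r * H r)"
  proof (intro sum.cong refl)
    fix r assume r: "r \<in> X - {i}"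
    have "(\<Sum>k. e j r * Qs k r + p j r * Gs k r) = (\<Sum>k. e j r * Qs k r) + (\<Sum>k. p j r * Gs k r)"
      using sG[OF r] sQ[OF r] by (intro suminf_add[symmetric] summable_mult)
    also have "\<dots> = e j r * (\<Sum>k. Qs k r) + p j r * (\<Sum>k. Gs k r)"
      using sG[OF r] sQ[OF r] by (simp add: suminf_mult)
    finally show "(\<Sum>k. e j r * Qs k r + p j r * Gs k r) = e j r + p j r * H r"
      using sQ1[OF r] unfolding H_def by simp
  qed
  also have "Gs 0 j + (\<Sum>r\<in>X-{i}. e j r + p j r * H r) = (\<Sum>k\<in>X. e j k) + (\<Sum>r\<in>X-{i}. p j r * H r)"
    unfolding sumS_e by (simp add: Gs_0 sum.distrib)
  finally show ?thesis .
qed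

end

lemma (in mc) chain: "chain_ok X i p"
  unfolding chain_ok_def
proof (intro conjI ballI allI impI)
  fix j k assume "j \<in> X" "k \<in> X" then show "0 \<le> p j k" by (rule pnn)
next
  fix j assume "j \<in> X" then show "(\<Sum>k\<in>X. p j k) = 1" by (rule st)
next
  fix U assume U: "U \<subseteq> X - {i} \<and> U \<noteq> {}"
  then obtain j where j: "j \<in> U" by blast
  then have jX: "j \<in> X" using U by blast
  obtain n l where l: "l 0 = j" "l (Suc n) = i" "\<forall>m\<le>Suc n. l m \<in> X" "\<forall>m\<le>n. p (l m) (l (Suc m)) > 0"
    using reach[OF jX] by blast
  have "l 0 \<in> U" "l (Suc n) \<notin> U" using l j U by auto
  then obtain m where m: "m < Suc n" "l m \<in> U" "l (Suc m) \<notin> U" using first_exit[of "\<lambda>v. v \<in> U" l "Suc n"] by blast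
  have "p (l m) (l (Suc m)) > 0" using l(4) m(1) by auto
  moreover have "l (Suc m) \<in> X" using l(3) m(1) by auto
  ultimately show "\<exists>j\<in>U. \<exists>k\<in>X - U. 0 < p j k" using m by blast
qed

lemma (in mc) H_srt:
  assumes "X = {1..N}" "p = smp Q x" "e = sme Q x"
  shows "sm_return_time N Q x i = H i"
proof -
  have h: "H i = (\<Sum>k. \<Sum>xs\<in>Lst (X-{i}) k. pt p e (i # xs @ [i]))" unfolding H_def Gs_def by simp
  show ?thesis unfolding h sm_return_time_def path_time_ptime ptime_eq Lst_def using assms by simp
qed

lemma PL_exp_nonneg:
  fixes f :: "real \<Rightarrow> real" and k :: int
  assumes "0 < d" "c > 0" "C > 0" "e1 > 0" "e1 \<le> 1"
    "\<And>x. 0<x \<Longrightarrow> x\<le>e1 \<Longrightarrow> \<bar>f x - c * x powi k\<bar> \<le> C * x powi k * x powr d"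
    "\<And>x. 0<x \<Longrightarrow> x\<le>e1 \<Longrightarrow> f x \<le> 1"
  shows "k \<ge> 0"
proof (rule ccontr)
  assume "\<not> k \<ge> 0"
  then have k: "k \<le> -1" by simp
  define x where "x = min e1 (min ((c/(2 * C)) powr (1/d)) (c/4))"
  have x: "0 < x" "x \<le> e1" "x \<le> 1" "x \<le> c/4" using assms unfolding x_def by auto
  have "x powr d \<le> ((c/(2 * C)) powr (1/d)) powr d"
    using x assms(1) unfolding x_def by (intro powr_mono2) auto
  also have "\<dots> = c/(2 * C)" using assms by (simp add: powr_powr)
  finally have xd: "C * x powr d \<le> c/2" using assms by (simp add: field_simps)
  have xk: "x powi k \<ge> 0" using x by simp
  have "f x \<ge> c * x powi k - C * x powi k * x powr d" using assms(6)[OF x(1,2)] by (simp add: abs_le_iff)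
  moreover have "C * x powi k * x powr d \<le> (c/2) * x powi k"
    using xd xk by (metis mult.commute mult.left_commute mult_right_mono)
  ultimately have f1: "f x \<ge> (c/2) * x powi k" by linarith
  have "x powi (-1) \<le> x powi k" using x k by (intro power_int_decreasing) auto
  then have "1 / x \<le> x powi k" by (simp add: power_int_minus divide_inverse)
  moreover have "2 \<le> (c/2) * (1/x)" using x assms(2) by (simp add: field_simps)
  ultimately have "2 \<le> (c/2) * x powi k" using assms(2)
    by (smt (verit, ccfv_SIG) divide_pos_pos mult_left_mono)
  then show False using f1 assms(7)[OF x(1,2)] by linarith
qed

theorem theorem4:
  fixes N :: nat and eps0 :: real and Q :: smkernel and Y :: "nat \<Rightarrow> nat set"
    and lm lp :: "nat \<Rightarrow> nat \<Rightarrow> nat" and a :: "nat \<Rightarrow> nat \<Rightarrow> nat \<Rightarrow> real"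
    and dl G epsp :: "nat \<Rightarrow> nat \<Rightarrow> real"
    and mm mp :: "nat \<Rightarrow> nat \<Rightarrow> int" and b :: "nat \<Rightarrow> nat \<Rightarrow> int \<Rightarrow> real"
    and dld Gd epsd :: "nat \<Rightarrow> nat \<Rightarrow> real"
  assumes N: "N \<ge> 1"
    and eps0: "0 < eps0" "eps0 \<le> 1"
      and kern_sets: "\<And>eps i j. 0 < eps \<Longrightarrow> eps \<le> eps0 \<Longrightarrow> i \<in> {1..N} \<Longrightarrow> j \<in> {1..N} \<Longrightarrow>
          sets (Q eps i j) = sets borel"
    and kern_fin: "\<And>eps i j. 0 < eps \<Longrightarrow> eps \<le> eps0 \<Longrightarrow> i \<in> {1..N} \<Longrightarrow> j \<in> {1..N} \<Longrightarrow>
          finite_measure (Q eps i j)"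
    and kern_pos: "\<And>eps i j. 0 < eps \<Longrightarrow> eps \<le> eps0 \<Longrightarrow> i \<in> {1..N} \<Longrightarrow> j \<in> {1..N} \<Longrightarrow>
          emeasure (Q eps i j) {..<0} = 0"
    and kern_int: "\<And>eps i j. 0 < eps \<Longrightarrow> eps \<le> eps0 \<Longrightarrow> i \<in> {1..N} \<Longrightarrow> j \<in> {1..N} \<Longrightarrow>
          integrable (Q eps i j) (\<lambda>t. t)"
    and kern_stoch: "\<And>eps i. 0 < eps \<Longrightarrow> eps \<le> eps0 \<Longrightarrow> i \<in> {1..N} \<Longrightarrow>
          (\<Sum>j\<in>{1..N}. smp Q eps i j) = 1"
      and A_sub: "\<And>i. i \<in> {1..N} \<Longrightarrow> Y i \<subseteq> {1..N} \<and> Y i \<noteq> {}"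
    and A_a: "\<And>eps i j. 0 < eps \<Longrightarrow> eps \<le> eps0 \<Longrightarrow> i \<in> {1..N} \<Longrightarrow> j \<in> Y i \<Longrightarrow>
          smp Q eps i j > 0"
    and A_b: "\<And>eps i j. 0 < eps \<Longrightarrow> eps \<le> eps0 \<Longrightarrow> i \<in> {1..N} \<Longrightarrow> j \<in> {1..N} \<Longrightarrow>
          j \<notin> Y i \<Longrightarrow> smp Q eps i j = 0"
    and A_c: "\<And>i j. i \<in> {1..N} \<Longrightarrow> j \<in> {1..N} \<Longrightarrow>
          \<exists>n\<ge>1. \<exists>l :: nat \<Rightarrow> nat. l 0 = i \<and> l n = j \<and> (\<forall>m\<in>{1..n}. l m \<in> Y (l (m - 1)))"
      and D: "\<And>i j. i \<in> {1..N} \<Longrightarrow> j \<in> Y i \<Longrightarrow>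
          lm i j \<le> lp i j \<and> a i j (lm i j) > 0 \<and> 0 < dl i j \<and> dl i j \<le> 1 \<and> 0 < G i j \<and>
          0 < epsp i j \<and> epsp i j \<le> eps0 \<and>
          (\<forall>eps. 0 < eps \<and> eps \<le> epsp i j \<longrightarrow>
             \<bar>smp Q eps i j - (\<Sum>l=lm i j..lp i j. a i j l * eps ^ l)\<bar>
               \<le> G i j * eps powr (real (lp i j) + dl i j))"
      and E: "\<And>i j. i \<in> {1..N} \<Longrightarrow> j \<in> Y i \<Longrightarrow>
          mm i j \<le> mp i j \<and> b i j (mm i j) > 0 \<and> 0 < dld i j \<and> dld i j \<le> 1 \<and> 0 < Gd i j \<and>
          0 < epsd i j \<and> epsd i j \<le> eps0 \<and>
          (\<forall>eps. 0 < eps \<and> eps \<le> epsd i j \<longrightarrow>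
             \<bar>sme Q eps i j - (\<Sum>l=mm i j..mp i j. b i j l * eps powi l)\<bar>
               \<le> Gd i j * eps powr (real_of_int (mp i j) + dld i j))"
  shows "\<forall>i\<in>{1..N}. \<exists>nm np :: nat. \<exists>c :: nat \<Rightarrow> real. \<exists>Gs epsi :: real.
           nm \<le> np \<and> c nm \<noteq> 0 \<and> 0 < Gs \<and> 0 < epsi \<and> epsi \<le> eps0 \<and>
           (\<forall>eps. 0 < eps \<and> eps \<le> epsi \<longrightarrow>
              \<bar>sm_stat N Q eps i - (\<Sum>l=nm..np. c l * eps ^ l)\<bar>
                \<le> Gs * eps powr (real np +
                     Min {min (dl i' j) (dld i' j) | i' j. i' \<in> {1..N} \<and> j \<in> Y i'}))"
proof (intro ballI)
  fix i assume iX: "i \<in> {1..N}"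
  define Dset where "Dset = {min (dl i' j) (dld i' j) | i' j. i' \<in> {1..N} \<and> j \<in> Y i'}"
  define \<delta> where "\<delta> = Min Dset"
  have Dfin: "finite Dset"
  proof (rule finite_subset)
    show "Dset \<subseteq> (\<lambda>(a, b). min (dl a b) (dld a b)) ` ({1..N} \<times> {1..N})"
      unfolding Dset_def using A_sub by fastforce
  qed auto
  have oneX: "(1::nat) \<in> {1..N}" using N by simp
  obtain j1 where j1: "j1 \<in> Y 1" using A_sub[OF oneX] by blast
  have j1mem: "min (dl 1 j1) (dld 1 j1) \<in> Dset" unfolding Dset_def using oneX j1 by blast
  have Dne: "Dset \<noteq> {}" using j1mem by blast
  have Dpos: "\<forall>a\<in>Dset. 0 < a" unfolding Dset_def using D E by fastforce
  have dpos: "0 < \<delta>" unfolding \<delta>_def using Dfin Dne Dpos by (subst Min_gr_iff) auto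
  have dle: "\<And>i' j. i' \<in> {1..N} \<Longrightarrow> j \<in> Y i' \<Longrightarrow> \<delta> \<le> dl i' j \<and> \<delta> \<le> dld i' j"
  proof -
    fix i' j assume h: "i' \<in> {1..N}" "j \<in> Y i'"
    have "min (dl i' j) (dld i' j) \<in> Dset" unfolding Dset_def using h by blast
    then have "\<delta> \<le> min (dl i' j) (dld i' j)" unfolding \<delta>_def using Dfin by (intro Min_le) auto
    then show "\<delta> \<le> dl i' j \<and> \<delta> \<le> dld i' j" by simp
  qed
  have d1: "\<delta> \<le> 1" using dle[OF oneX j1] D[OF oneX j1] by linarith
  have pnn: "\<And>x j k. 0 \<le> smp Q x j k" unfolding smp_def by simp
  have enn: "\<And>x j k. 0 < x \<Longrightarrow> x \<le> eps0 \<Longrightarrow> j \<in> {1..N} \<Longrightarrow> k \<in> {1..N} \<Longrightarrow> 0 \<le> sme Q x j k"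
  proof -
    fix x j k assume h: "0 < x" "x \<le> eps0" "j \<in> {1..N}" "k \<in> {1..N}"
    have "{..<0} \<in> null_sets (Q x j k)"
      using kern_sets[OF h] kern_pos[OF h] by (simp add: null_sets_def)
    then have "AE t in Q x j k. 0 \<le> t" by (rule AE_I') auto
    then show "0 \<le> sme Q x j k" unfolding sme_def by (rule integral_nonneg_AE)
  qed
  have ezero: "\<And>x j k. 0 < x \<Longrightarrow> x \<le> eps0 \<Longrightarrow> j \<in> {1..N} \<Longrightarrow> k \<in> {1..N} \<Longrightarrow> smp Q x j k = 0 \<Longrightarrow> sme Q x j k = 0"
  proof -
    fix x j k assume h: "0 < x" "x \<le> eps0" "j \<in> {1..N}" "k \<in> {1..N}" and z: "smp Q x j k = 0"
    interpret fm: finite_measure "Q x j k" using kern_fin[OF h] .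
    have sp: "space (Q x j k) = UNIV" using sets_eq_imp_space_eq[OF kern_sets[OF h]] by simp
    have "emeasure (Q x j k) UNIV = 0" using z unfolding smp_def using fm.emeasure_eq_measure by simp
    then have "UNIV \<in> null_sets (Q x j k)" using sp by (simp add: null_sets_def) (metis sets.top sp)
    then have "AE t in Q x j k. t = 0" by (rule AE_I') auto
    then show "sme Q x j k = 0" unfolding sme_def by (rule integral_eq_zero_AE)
  qed
  have outY: "\<And>x j k. 0 < x \<Longrightarrow> x \<le> eps0 \<Longrightarrow> j \<in> {1..N} \<Longrightarrow> k \<in> {1..N} \<Longrightarrow> k \<notin> Y j \<Longrightarrow> smp Q x j k = 0 \<and> sme Q x j k = 0"
    using A_b ezero by blast
  have reach: "\<And>x j. 0 < x \<Longrightarrow> x \<le> eps0 \<Longrightarrow> j \<in> {1..N} \<Longrightarrow> \<exists>n l. l 0 = j \<and> l (Suc n) = i \<and> (\<forall>m\<le>Suc n. l m \<in> {1..N}) \<and>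
                   (\<forall>m\<le>n. smp Q x (l m) (l (Suc m)) > 0)"
  proof -
    fix x j assume x: "0 < x" "x \<le> eps0" and j: "j \<in> {1..N}"
    obtain n :: nat and l where n: "n \<ge> 1" "l 0 = j" "l n = i" "\<forall>m\<in>{1..n}. l m \<in> Y (l (m - 1))"
      using A_c[OF j iX] by blast
    obtain n' where n': "n = Suc n'" using n(1) by (cases n) auto
    have inX: "\<forall>m\<le>Suc n'. l m \<in> {1..N}"
    proof (intro allI impI)
      fix m assume "m \<le> Suc n'"
      then show "l m \<in> {1..N}"
      proof (induction m)
        case 0 then show ?case using n j by simp
      next
        case (Suc m)
        have lm: "l m \<in> {1..N}" using Suc by simp
        have "Suc m \<in> {1..n}" using Suc.prems n' by simp
        then have "l (Suc m) \<in> Y (l (Suc m - 1))" using n(4) by blast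
        then have "l (Suc m) \<in> Y (l m)" by simp
        then show ?case using A_sub[OF lm] by blast
      qed
    qed
    have pos: "\<forall>m\<le>n'. smp Q x (l m) (l (Suc m)) > 0"
    proof (intro allI impI)
      fix m assume m: "m \<le> n'"
      have "Suc m \<in> {1..n}" using m n' by simp
      then have "l (Suc m) \<in> Y (l (Suc m - 1))" using n(4) by blast
      then have "l (Suc m) \<in> Y (l m)" by simp
      moreover have "l m \<in> {1..N}" using inX m by simp
      ultimately show "smp Q x (l m) (l (Suc m)) > 0" using A_a x by blast
    qed
    show "\<exists>n l. l 0 = j \<and> l (Suc n) = i \<and> (\<forall>m\<le>Suc n. l m \<in> {1..N}) \<and> (\<forall>m\<le>n. smp Q x (l m) (l (Suc m)) > 0)"
      using n n' inX pos by blast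
  qed
  define Mx where "Mx = (\<lambda>x. \<Sum>j\<in>{1..N}. \<Sum>k\<in>{1..N}. sme Q x j k / smp Q x j k)"
  have mcx: "\<And>x. 0 < x \<Longrightarrow> x \<le> eps0 \<Longrightarrow> mc {1..N} i (smp Q x) (sme Q x) (Mx x)"
  proof -
    fix x assume x: "0 < x" "x \<le> eps0"
    have qnn: "\<And>j k. j \<in> {1..N} \<Longrightarrow> k \<in> {1..N} \<Longrightarrow> 0 \<le> sme Q x j k / smp Q x j k"
      using enn[OF x] pnn by simp
    show "mc {1..N} i (smp Q x) (sme Q x) (Mx x)"
    proof (unfold_locales)
      show "i \<in> {1..N}" by (rule iX)
    next
      fix j k assume "j \<in> {1..N}" "k \<in> {1..N}" then show "0 \<le> sme Q x j k" using enn[OF x] by blast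
    next
      fix j assume "j \<in> {1..N}" then show "(\<Sum>k\<in>{1..N}. smp Q x j k) = 1" using kern_stoch[OF x] by blast
    next
      fix j k assume jk: "j \<in> {1..N}" "k \<in> {1..N}"
      show "sme Q x j k \<le> Mx x * smp Q x j k"
      proof (cases "smp Q x j k = 0")
        case True then show ?thesis using ezero[OF x jk] by simp
      next
        case False
        have "sme Q x j k / smp Q x j k \<le> (\<Sum>k\<in>{1..N}. sme Q x j k / smp Q x j k)"
          using jk qnn by (intro member_le_sum) auto
        also have "\<dots> \<le> Mx x" unfolding Mx_def using jk qnn
          by (intro member_le_sum[of j "{1..N}" "\<lambda>j. \<Sum>k\<in>{1..N}. sme Q x j k / smp Q x j k"] sum_nonneg) auto
        finally have "sme Q x j k / smp Q x j k * smp Q x j k \<le> Mx x * smp Q x j k"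
          using pnn by (intro mult_right_mono) auto
        then show ?thesis using False by simp
      qed
    next
      show "0 \<le> Mx x" unfolding Mx_def using qnn by (intro sum_nonneg) auto
    next
      fix j assume "j \<in> {1..N}" then show "\<exists>n l. l 0 = j \<and> l (Suc n) = i \<and> (\<forall>m\<le>Suc n. l m \<in> {1..N}) \<and>
                   (\<forall>m\<le>n. smp Q x (l m) (l (Suc m)) > 0)" using reach[OF x] by blast
    qed (auto simp: pnn)
  qed
  define Hf where "Hf = (\<lambda>x j. mc.H {1..N} i (smp Q x) (sme Q x) j)"
  have Hprops: "\<And>x. 0 < x \<Longrightarrow> x \<le> eps0 \<Longrightarrow> chain_ok {1..N} i (smp Q x) \<and>
        (\<forall>j\<in>{1..N}. Hf x j = sme_state N Q x j + (\<Sum>k\<in>{1..N}-{i}. smp Q x j k * Hf x k)) \<and>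
        (\<forall>j\<in>{1..N}. 0 \<le> Hf x j) \<and> sm_return_time N Q x i = Hf x i"
  proof -
    fix x assume x: "0 < x" "x \<le> eps0"
    interpret m: mc "{1..N}" i "smp Q x" "sme Q x" "Mx x" by (rule mcx[OF x])
    show "chain_ok {1..N} i (smp Q x) \<and>
        (\<forall>j\<in>{1..N}. Hf x j = sme_state N Q x j + (\<Sum>k\<in>{1..N}-{i}. smp Q x j k * Hf x k)) \<and>
        (\<forall>j\<in>{1..N}. 0 \<le> Hf x j) \<and> sm_return_time N Q x i = Hf x i"
    proof (intro conjI ballI)
      show "chain_ok {1..N} i (smp Q x)" by (rule m.chain)
    next
      fix j assume j: "j \<in> {1..N}"
      show "Hf x j = sme_state N Q x j + (\<Sum>k\<in>{1..N}-{i}. smp Q x j k * Hf x k)"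
        unfolding Hf_def sme_state_def by (rule m.H_eq[OF j])
    next
      fix j assume j: "j \<in> {1..N}"
      show "0 \<le> Hf x j" unfolding Hf_def by (rule m.H_nn[OF j])
    next
      show "sm_return_time N Q x i = Hf x i" unfolding Hf_def by (rule m.H_srt) auto
    qed
  qed
  have PLp: "\<And>j k. j \<in> {1..N} \<Longrightarrow> k \<in> Y j \<Longrightarrow> PL \<delta> (\<lambda>x. smp Q x j k)"
  proof -
    fix j k assume jk: "j \<in> {1..N}" "k \<in> Y j"
    note Djk = D[OF jk]
    show "PL \<delta> (\<lambda>x. smp Q x j k)"
      by (rule PL_D[where dl="dl j k" and lm="lm j k" and lp="lp j k" and a="a j k" and G="G j k" and ee="epsp j k"])
         (use Djk dpos d1 dle[OF jk] in auto)
  qed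
  have PLe: "\<And>j k. j \<in> {1..N} \<Longrightarrow> k \<in> Y j \<Longrightarrow> PL \<delta> (\<lambda>x. sme Q x j k)"
  proof -
    fix j k assume jk: "j \<in> {1..N}" "k \<in> Y j"
    note Ejk = E[OF jk]
    show "PL \<delta> (\<lambda>x. sme Q x j k)"
      by (rule PL_E[where dl="dld j k" and mm="mm j k" and mp="mp j k" and b="b j k" and G="Gd j k" and ee="epsd j k"])
         (use Ejk dpos d1 dle[OF jk] in auto)
  qed
  have Z0Y: "\<And>j k. j \<in> {1..N} \<Longrightarrow> k \<in> {1..N} \<Longrightarrow> k \<notin> Y j \<Longrightarrow> Z0 (\<lambda>x. smp Q x j k) \<and> Z0 (\<lambda>x. sme Q x j k)"
    unfolding Z0_def using outY eps0(1) by blast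
  have PZp: "\<forall>j\<in>{1..N}. \<forall>k\<in>{1..N}. PZ \<delta> (\<lambda>x. smp Q x j k)"
    using PLp Z0Y unfolding PZ_def by blast
  have PZe: "\<And>j k. j \<in> {1..N} \<Longrightarrow> k \<in> {1..N} \<Longrightarrow> PZ \<delta> (\<lambda>x. sme Q x j k)"
    using PLe Z0Y unfolding PZ_def by blast
  have PLst: "\<forall>j\<in>{1..N}. PL \<delta> (\<lambda>x. sme_state N Q x j)"
  proof
    fix j assume j: "j \<in> {1..N}"
    obtain k0 where k0: "k0 \<in> Y j" using A_sub[OF j] by blast
    have k0X: "k0 \<in> {1..N}" using A_sub[OF j] k0 by blast
    have "PZ \<delta> (\<lambda>x. \<Sum>k\<in>{1..N}-{k0}. sme Q x j k)"
      using PZe[OF j] dpos d1 by (intro PZ_sum) auto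
    then have "PL \<delta> (\<lambda>x. sme Q x j k0 + (\<Sum>k\<in>{1..N}-{k0}. sme Q x j k))"
      using PLe[OF j k0] dpos d1 by (intro PL_add_PZ) auto
    moreover have "\<And>x. sme Q x j k0 + (\<Sum>k\<in>{1..N}-{k0}. sme Q x j k) = sme_state N Q x j"
      unfolding sme_state_def using k0X by (simp add: sum.remove)
    ultimately show "PL \<delta> (\<lambda>x. sme_state N Q x j)" by simp
  qed
  have PLH: "PL \<delta> (\<lambda>x. Hf x i)"
    by (rule elim[OF dpos d1, where T="{1..N}" and p="\<lambda>x. smp Q x" and e="\<lambda>x j. sme_state N Q x j" and ee=eps0])
       (use iX eps0 Hprops PZp PLst in auto)
  have PLpi: "PL \<delta> (\<lambda>x. sme_state N Q x i * (1 / Hf x i))"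
    using PLst iX PL_inv[OF dpos PLH] by (intro PL_mult) (use dpos in auto)
  have PLstat: "PL \<delta> (\<lambda>x. sm_stat N Q x i)"
    by (rule PL_cong[OF PLpi eps0(1)]) (use Hprops in \<open>simp add: sm_stat_def\<close>)
  obtain c C e1 k where ck: "c>0" "C>0" "e1>0" "e1 \<le> 1"
    "\<And>x. 0<x \<Longrightarrow> x\<le>e1 \<Longrightarrow> \<bar>sm_stat N Q x i - c * x powi k\<bar> \<le> C * x powi k * x powr \<delta>"
    by (rule PLE[OF PLstat]) metis
  have le1: "\<And>x. 0 < x \<Longrightarrow> x \<le> eps0 \<Longrightarrow> sm_stat N Q x i \<le> 1"
  proof -
    fix x assume x: "0 < x" "x \<le> eps0"
    have hp: "\<forall>j\<in>{1..N}. Hf x j = sme_state N Q x j + (\<Sum>k\<in>{1..N}-{i}. smp Q x j k * Hf x k)"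
      "\<forall>j\<in>{1..N}. 0 \<le> Hf x j" "sm_return_time N Q x i = Hf x i" using Hprops[OF x] by blast+
    have s: "0 \<le> (\<Sum>k\<in>{1..N}-{i}. smp Q x i k * Hf x k)" using hp(2) pnn by (intro sum_nonneg mult_nonneg_nonneg) auto
    have e0: "0 \<le> sme_state N Q x i" unfolding sme_state_def using enn[OF x] iX by (intro sum_nonneg) auto
    have "sme_state N Q x i \<le> Hf x i" using hp(1) iX s by simp
    then show "sm_stat N Q x i \<le> 1" unfolding sm_stat_def hp(3) using e0
      by (cases "Hf x i = 0") (auto simp: divide_le_eq_1)
  qed
  have k0: "k \<ge> 0"
    by (rule PL_exp_nonneg[OF dpos ck(1,2), of "min e1 eps0" "\<lambda>x. sm_stat N Q x i"]) (use ck eps0 le1 in auto)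
  show "\<exists>nm np. \<exists>c :: nat \<Rightarrow> real. \<exists>Gs epsi :: real.
           nm \<le> np \<and> c nm \<noteq> 0 \<and> 0 < Gs \<and> 0 < epsi \<and> epsi \<le> eps0 \<and>
           (\<forall>eps. 0 < eps \<and> eps \<le> epsi \<longrightarrow>
              \<bar>sm_stat N Q eps i - (\<Sum>l=nm..np. c l * eps ^ l)\<bar>
                \<le> Gs * eps powr (real np +
                     Min {min (dl i' j) (dld i' j) | i' j. i' \<in> {1..N} \<and> j \<in> Y i'}))"
  proof (intro exI conjI allI impI)
    show "nat k \<le> nat k" by simp
    show "(\<lambda>_. c) (nat k) \<noteq> 0" using ck by simp
    show "0 < C" by (rule ck)
    show "0 < min e1 eps0" using ck eps0 by simp
    show "min e1 eps0 \<le> eps0" by simp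
  next
    fix x assume x: "0 < x \<and> x \<le> min e1 eps0"
    have pk: "x ^ nat k = x powi k" using k0 by (simp add: power_int_def)
    have pr: "x powr (real (nat k) + \<delta>) = x powi k * x powr \<delta>"
    proof -
      have a: "x powr real_of_int k = x powi k" using x by (intro powr_real_of_int') auto
      have "real (nat k) = real_of_int k" using k0 by simp
      then show ?thesis using a by (simp add: powr_add)
    qed
    show "\<bar>sm_stat N Q x i - (\<Sum>l = nat k..nat k. c * x ^ l)\<bar>
          \<le> C * x powr (real (nat k) + Min {min (dl i' j) (dld i' j) | i' j. i' \<in> {1..N} \<and> j \<in> Y i'})"
      using ck(5)[of x] x unfolding Dset_def[symmetric] \<delta>_def[symmetric] pr pk by (simp add: mult.assoc pk)
  qed
qed

end
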